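(* In the setting below, the limit $N=\lim_{t\to\infty}(S+tP)^{-1}$ satisfies $$N=S^{-1}-S^{-1}U(U^\top S^{-1}U)^{-1}U^\top S^{-1},$$ where $U^\top S^{-1}U$ is positive definite. In particular $N$ depends only on the sizes $p_i,q_i$ of the bipartition classes of the bipartite components of $G$ and on $s$.
   Context: Let $n\ge3$, $\ell>0$, $\alpha\ge(n-2)\ell$, $S=\alpha I_n+\ell\mathbf{1}_n\mathbf{1}_n^\top$. For a real matrix $P$, $\Delta_i(P)=|P_{ii}|-\sum_{j\ne i}|P_{ij}|$. A signless Laplacian is a real symmetric $n\times n$ matrix $P$ with $P_{ij}\in\{0,1\}$ for $i\ne j$, $P_{ii}\ge0$, and $\Delta_i(P)\in\{0,2\}$ for all $i$; its graph $G$ has vertex set $\{1,\dots,n\}$, an edge $\{i,j\}$ ($i\ne j$) whenever $P_{ij}=1$, and a self-loop $\{i,i\}$ whenever $\Delta_i(P)=2$ (graphs with self-loops are not bipartite). Relabel vertices so that the bipartite components $G_1,\dots,G_r$ come first, each occupying consecutive vertices with one bipartition class (of size $p_i\ge1$) listed first followed by the other (of size $q_i\ge0$), and the remaining $s=n-\sum_{i=1}^r(p_i+q_i)$ vertices lie in non-bipartite components. For $p\ge1,q\ge0$ let $U_{(p,q)}$ be the $(p+q)\times(p+q-1)$ matrix $$U_{(p,q)}=\begin{pmatrix}\mathbf{1}_{p-1}^\top&\mathbf{1}_q^\top\\-I_{p-1}&0\\0&I_q\end{pmatrix},$$ and let $U$ be the $n\times(n-r)$ block-diagonal matrix $U=\operatorname{diag}(U_{(p_1,q_1)},\dots,U_{(p_r,q_r)},I_s)$.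 *)

theory Defs
  imports "HOL-Analysis.Analysis" "Jordan_Normal_Form.Matrix"
begin

definition minv :: "real mat \<Rightarrow> real mat" where
  "minv A = (SOME B. B \<in> carrier_mat (dim_row A) (dim_row A) \<and>
                      A * B = 1\<^sub>m (dim_row A) \<and> B * A = 1\<^sub>m (dim_row A))"

definition pos_def_mat :: "real mat \<Rightarrow> bool" where
  "pos_def_mat A \<longleftrightarrow> (\<exists>k. A \<in> carrier_mat k k \<and> A\<^sup>T = A \<and>
     (\<forall>v \<in> carrier_vec k. v \<noteq> 0\<^sub>v k \<longrightarrow> v \<bullet> (A *\<^sub>v v) > 0))"

definition Delta :: "real mat \<Rightarrow> nat \<Rightarrow> real" where
  "Delta P i = \<bar>P $$ (i,i)\<bar> - (\<Sum>j\<in>{0..<dim_col P} - {i}. \<bar>P $$ (i,j)\<bar>)"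

definition signless_laplacian :: "nat \<Rightarrow> real mat \<Rightarrow> bool" where
  "signless_laplacian n P \<longleftrightarrow> P \<in> carrier_mat n n \<and> P\<^sup>T = P \<and>
     (\<forall>i<n. \<forall>j<n. i \<noteq> j \<longrightarrow> P $$ (i,j) = 0 \<or> P $$ (i,j) = 1) \<and>
     (\<forall>i<n. P $$ (i,i) \<ge> 0) \<and>
     (\<forall>i<n. Delta P i = 0 \<or> Delta P i = 2)"

definition gedge :: "real mat \<Rightarrow> nat \<Rightarrow> nat \<Rightarrow> bool" where
  "gedge P i j \<longleftrightarrow> i < dim_row P \<and> j < dim_row P \<and> i \<noteq> j \<and> P $$ (i,j) = 1"

definition gloop :: "real mat \<Rightarrow> nat \<Rightarrow> bool" where
  "gloop P i \<longleftrightarrow> i < dim_row P \<and> Delta P i = 2"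

definition comp :: "real mat \<Rightarrow> nat \<Rightarrow> nat set" where
  "comp P v = {w. (gedge P)\<^sup>*\<^sup>* v w}"

definition bipartite_with :: "real mat \<Rightarrow> nat set \<Rightarrow> nat set \<Rightarrow> nat set \<Rightarrow> bool" where
  "bipartite_with P C A B \<longleftrightarrow> A \<union> B = C \<and> A \<inter> B = {} \<and>
     (\<forall>v\<in>C. \<not> gloop P v) \<and>
     (\<forall>u\<in>C. \<forall>v\<in>C. gedge P u v \<longrightarrow> (u \<in> A \<longleftrightarrow> v \<in> B))"

definition bipartite :: "real mat \<Rightarrow> nat set \<Rightarrow> bool" where
  "bipartite P C \<longleftrightarrow> (\<exists>A B. bipartite_with P C A B)"

text \<open>Offset (first vertex) of the k-th bipartite block.\<close>
definition off :: "(nat \<times> nat) list \<Rightarrow> nat \<Rightarrow> nat" where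
  "off ps k = sum_list (map (\<lambda>(p,q). p + q) (take k ps))"

definition Ublock :: "nat \<Rightarrow> nat \<Rightarrow> real mat" where
  "Ublock p q = mat (p + q) (p + q - 1) (\<lambda>(i,j).
     if i = 0 then 1 else if j = i - 1 then (if i < p then -1 else 1) else 0)"

definition Umat :: "(nat \<times> nat) list \<Rightarrow> nat \<Rightarrow> real mat" where
  "Umat ps s = diag_block_mat (map (\<lambda>(p,q). Ublock p q) ps @ [1\<^sub>m s])"

definition Smat :: "nat \<Rightarrow> real \<Rightarrow> real \<Rightarrow> real mat" where
  "Smat n \<alpha> l = \<alpha> \<cdot>\<^sub>m 1\<^sub>m n + l \<cdot>\<^sub>m mat n n (\<lambda>_. 1)"

end

theory Submission
  imports Defs "Jordan_Normal_Form.Determinant"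
begin

lemma minv_unique:
  assumes A: "A \<in> carrier_mat n n" and B: "B \<in> carrier_mat n n"
    and AB: "A * B = 1\<^sub>m n" and BA: "B * A = 1\<^sub>m n"
  shows "minv A = B"
proof -
  let ?P = "\<lambda>B. B \<in> carrier_mat (dim_row A) (dim_row A) \<and> A * B = 1\<^sub>m (dim_row A) \<and> B * A = 1\<^sub>m (dim_row A)"
  have "?P B" using A B AB BA by auto
  hence P: "?P (minv A)" unfolding minv_def by (rule someI)
  hence M: "minv A \<in> carrier_mat n n" using A by auto
  have "minv A = minv A * (A * B)" using M AB by simp
  also have "\<dots> = (minv A * A) * B" using assoc_mult_mat[OF M A B] by simp
  also have "\<dots> = B" using P B A by simp
  finally show ?thesis .
qed

lemma minv_det:
  assumes A: "A \<in> carrier_mat n n" and d: "Determinant.det A \<noteq> 0"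
  shows "minv A \<in> carrier_mat n n \<and> A * minv A = 1\<^sub>m n \<and> minv A * A = 1\<^sub>m n"
proof -
  have "A \<in> Units (ring_mat TYPE(real) n undefined)"
    by (rule det_non_zero_imp_unit[OF A d])
  then obtain B where B: "B \<in> carrier_mat n n" "B * A = 1\<^sub>m n" "A * B = 1\<^sub>m n"
    unfolding Units_def by (auto simp: ring_mat_simps)
  have "minv A = B" by (rule minv_unique[OF A B(1) B(3) B(2)])
  thus ?thesis using B by auto
qed

lemma inj_det:
  assumes A: "A \<in> carrier_mat n n"
    and inj: "\<And>v. v \<in> carrier_vec n \<Longrightarrow> A *\<^sub>v v = 0\<^sub>v n \<Longrightarrow> v = 0\<^sub>v n"
  shows "Determinant.det A \<noteq> (0::real)"
  using det_0_iff_vec_prod_zero[OF A] inj by auto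

lemma mult_vec_entry: "(A::real mat) \<in> carrier_mat n n \<Longrightarrow> v \<in> carrier_vec n \<Longrightarrow> i < n \<Longrightarrow>
   (A *\<^sub>v v) $ i = (\<Sum>j<n. A $$ (i,j) * v $ j)"
  by (auto simp: scalar_prod_def atLeast0LessThan)

lemma quad_form: "(A::real mat) \<in> carrier_mat n n \<Longrightarrow> v \<in> carrier_vec n \<Longrightarrow>
   v \<bullet> (A *\<^sub>v v) = (\<Sum>i<n. \<Sum>j<n. A $$ (i,j) * v $ i * v $ j)"
  by (auto simp: scalar_prod_def atLeast0LessThan mult_vec_entry sum_distrib_left intro!: sum.cong
      simp del: index_mult_mat_vec)

lemma sum_take_le: "sum_list (map (f :: _ \<Rightarrow> nat) (take k xs)) \<le> sum_list (map f xs)"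
proof (induction xs arbitrary: k)
  case (Cons x xs)
  thus ?case by (cases k) (auto simp: add_le_mono)
qed simp

definition "roff As k = sum_list (map dim_row (take k As))"
definition "coff As k = sum_list (map dim_col (take k As))"

lemma diag_block_entry:
  "k < length As \<Longrightarrow> roff As k \<le> i \<Longrightarrow> i < roff As (Suc k) \<Longrightarrow> j < dim_col (diag_block_mat As) \<Longrightarrow>
   diag_block_mat As $$ (i,j) = (if coff As k \<le> j \<and> j < coff As (Suc k)
      then (As ! k) $$ (i - roff As k, j - coff As k) else 0)"
proof (induction As arbitrary: k i j)
  case Nil thus ?case by simp
next
  case (Cons A As)
  let ?B = "diag_block_mat As"
  have dr: "dim_row ?B = sum_list (map dim_row As)" "dim_col ?B = sum_list (map dim_col As)"
    using dim_diag_block_mat by auto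
  have i_lt: "i < dim_row A + dim_row ?B"
  proof -
    have "roff (A # As) (Suc k) \<le> roff (A # As) (length (A # As))"
      unfolding roff_def by (simp only: take_all order_refl sum_take_le)
    thus ?thesis using Cons(4) dr unfolding roff_def by simp
  qed
  have j_lt: "j < dim_col A + dim_col ?B" using Cons(5) by (simp add: Let_def)
  show ?case
  proof (cases k)
    case 0
    thus ?thesis using Cons(3-5) i_lt j_lt unfolding roff_def coff_def
      by (auto simp: Let_def)
  next
    case (Suc k')
    have k': "k' < length As" using Cons(2) Suc by simp
    have ro: "roff (A # As) k = dim_row A + roff As k'" "roff (A # As) (Suc k) = dim_row A + roff As (Suc k')"
      "coff (A # As) k = dim_col A + coff As k'" "coff (A # As) (Suc k) = dim_col A + coff As (Suc k')"
      unfolding roff_def coff_def Suc by auto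
    have i1: "dim_row A \<le> i" using Cons(3) ro by simp
    have IH: "j - dim_col A < dim_col ?B \<Longrightarrow> ?B $$ (i - dim_row A, j - dim_col A) =
       (if coff As k' \<le> j - dim_col A \<and> j - dim_col A < coff As (Suc k')
        then (As ! k') $$ (i - dim_row A - roff As k', j - dim_col A - coff As k') else 0)"
      using Cons.IH[OF k', of "i - dim_row A" "j - dim_col A"] Cons(3,4) ro by simp
    show ?thesis
    proof (cases "j < dim_col A")
      case True
      thus ?thesis using i1 i_lt j_lt ro by (simp add: Let_def)
    next
      case False
      hence "j - dim_col A < dim_col ?B" using j_lt by simp
      thus ?thesis using i1 i_lt j_lt ro False IH Suc by (auto simp: Let_def)
    qed
  qed
qed

lemma Ublock_entry: "a < p + q \<Longrightarrow> b < p + q - 1 \<Longrightarrow>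
  Ublock p q $$ (a,b) = (if a = 0 then 1 else if b = a - 1 then (if a < p then -1 else 1) else 0)"
  unfolding Ublock_def by simp

lemma Ublock_dim[simp]: "dim_row (Ublock p q) = p + q" "dim_col (Ublock p q) = p + q - 1"
  unfolding Ublock_def by auto

lemma interval_cover: "g 0 = (0::nat) \<Longrightarrow> i < g K \<Longrightarrow> \<exists>k<K. g k \<le> i \<and> i < g (Suc k)"
proof (induction K arbitrary: i)
  case 0 thus ?case by simp
next
  case (Suc K)
  show ?case
  proof (cases "i < g K")
    case True
    with Suc obtain k where "k < K" "g k \<le> i" "i < g (Suc k)" by blast
    thus ?thesis by (intro exI[of _ k]) auto
  next
    case False thus ?thesis using Suc(3) by (intro exI[of _ K]) auto
  qed
qed

locale setting =
  fixes n :: nat and l \<alpha> :: real and P :: "real mat" and ps :: "(nat \<times> nat) list"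
  assumes n3: "n \<ge> 3" and lpos: "l > 0" and alpha: "\<alpha> \<ge> (real n - 2) * l"
    and SL: "signless_laplacian n P"
    and p_pos: "\<forall>(p,q) \<in> set ps. p \<ge> 1"
    and size: "sum_list (map (\<lambda>(p,q). p + q) ps) \<le> n"
    and blocks: "\<forall>k < length ps.
        comp P (off ps k) = {off ps k ..< off ps (Suc k)} \<and>
        bipartite_with P {off ps k ..< off ps (Suc k)}
          {off ps k ..< off ps k + fst (ps ! k)}
          {off ps k + fst (ps ! k) ..< off ps (Suc k)}"
    and rest: "\<forall>v. sum_list (map (\<lambda>(p,q). p + q) ps) \<le> v \<and> v < n \<longrightarrow> \<not> bipartite P (comp P v)"
begin

abbreviation "S \<equiv> Smat n \<alpha> l"

lemma apos: "\<alpha> > 0"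
proof -
  have "real n - 2 \<ge> 1" using n3 by simp
  hence "(real n - 2) * l \<ge> l" using lpos by simp
  thus ?thesis using alpha lpos by linarith
qed

lemma S_carrier: "S \<in> carrier_mat n n" unfolding Smat_def by auto

lemma S_entry: "i < n \<Longrightarrow> j < n \<Longrightarrow> S $$ (i,j) = (if i = j then \<alpha> else 0) + l"
  unfolding Smat_def by auto

definition "cS = l / (\<alpha> * (\<alpha> + real n * l))"

definition "Si = mat n n (\<lambda>(i,j). (if i = j then 1/\<alpha> else 0) - cS)"

lemma Si_carrier: "Si \<in> carrier_mat n n" unfolding Si_def by auto

lemma cS_eq: "l / \<alpha> - cS * (\<alpha> + real n * l) = 0"
proof -
  have "\<alpha> + real n * l > 0" using apos lpos by (simp add: add_pos_nonneg)
  hence d: "\<alpha> + real n * l \<noteq> 0" by simp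
  have "cS * (\<alpha> + real n * l) = l / \<alpha>"
    unfolding cS_def using d apos by (simp add: divide_simps)
  thus ?thesis by simp
qed

lemma S_Si: "S * Si = 1\<^sub>m n"
proof (rule eq_matI)
  fix i j assume i: "i < dim_row (1\<^sub>m n :: real mat)" and j: "j < dim_col (1\<^sub>m n :: real mat)"
  hence ij: "i < n" "j < n" by auto
  have "(S * Si) $$ (i,j) = (\<Sum>k<n. S $$ (i,k) * Si $$ (k,j))"
    using ij S_carrier Si_carrier by (auto simp: scalar_prod_def atLeast0LessThan)
  also have "\<dots> = (\<Sum>k<n. (if i = k then \<alpha> else 0) * (if k = j then 1/\<alpha> else 0)
      - (if i = k then \<alpha> else 0) * cS + l * (if k = j then 1/\<alpha> else 0) - l * cS)"
    using ij by (intro sum.cong, auto simp: S_entry Si_def algebra_simps)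
  also have "\<dots> = (if i = j then 1 else 0) - \<alpha> * cS + l / \<alpha> - real n * l * cS"
    using ij apos by (simp add: sum.distrib sum_subtractf if_distrib[of "\<lambda>x. x * _"] if_distrib[of "\<lambda>x. _ * x"] cong: if_cong)
  also have "\<dots> = (if i = j then 1 else 0)"
    using cS_eq by (simp add: algebra_simps)
  finally show "(S * Si) $$ (i,j) = 1\<^sub>m n $$ (i,j)" using ij by simp
qed (insert S_carrier Si_carrier, auto)

lemma Si_S: "Si * S = 1\<^sub>m n"
  using mat_mult_left_right_inverse[OF S_carrier Si_carrier S_Si] .

lemma minv_S: "minv S = Si"
  by (rule minv_unique[OF S_carrier Si_carrier S_Si Si_S])

lemma Si_sym: "Si\<^sup>T = Si"
  unfolding Si_def by (rule eq_matI, auto)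


abbreviation "r \<equiv> length ps"
abbreviation "R \<equiv> sum_list (map (\<lambda>(p,q). p + q) ps)"
abbreviation "pp k \<equiv> fst (ps ! k)"
abbreviation "qq k \<equiv> snd (ps ! k)"

lemma pp_pos: "k < r \<Longrightarrow> pp k \<ge> 1"
  using p_pos nth_mem[of k ps] by (cases "ps ! k") auto

lemma off_Suc: "k < r \<Longrightarrow> off ps (Suc k) = off ps k + pp k + qq k"
  unfolding off_def by (simp add: take_Suc_conv_app_nth split: prod.splits)

lemma off_ge: "k \<ge> r \<Longrightarrow> off ps k = R"
  unfolding off_def by simp

lemma off_0: "off ps 0 = 0" unfolding off_def by simp

lemma off_Suc_le: "off ps k \<le> off ps (Suc k)"
  by (cases "k < r") (auto simp: off_Suc off_ge)

lemma off_mono: "k \<le> k' \<Longrightarrow> off ps k \<le> off ps k'"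
  by (induction k' rule: dec_induct) (auto intro: order_trans[OF _ off_Suc_le])

lemma off_le_R: "off ps k \<le> R"
  using off_mono[of k "max k r"] off_ge[of "max k r"] by simp

lemma block_cover: "i < R \<Longrightarrow> \<exists>k<r. off ps k \<le> i \<and> i < off ps (Suc k)"
proof -
  have "\<forall>i < off ps K. \<exists>k<K. off ps k \<le> i \<and> i < off ps (Suc k)" for K
  proof (induction K)
    case 0 then show ?case by (simp add: off_0)
  next
    case (Suc K)
    show ?case
    proof (intro allI impI)
      fix i assume i: "i < off ps (Suc K)"
      show "\<exists>k<Suc K. off ps k \<le> i \<and> i < off ps (Suc k)"
      proof (cases "i < off ps K")
        case True
        with Suc.IH obtain k where "k < K" "off ps k \<le> i" "i < off ps (Suc k)" by auto
        thus ?thesis by (intro exI[of _ k]) auto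
      next
        case False then show ?thesis using i by (intro exI[of _ K]) auto
      qed
    qed
  qed
  from this[of r] show "i < R \<Longrightarrow> ?thesis" using off_ge[of r] by simp
qed

lemma block_unique:
  assumes "off ps k \<le> i" "i < off ps (Suc k)" "off ps k' \<le> i" "i < off ps (Suc k')"
  shows "k = k'"
proof (rule ccontr)
  assume "k \<noteq> k'"
  then consider "Suc k \<le> k'" | "Suc k' \<le> k" by linarith
  thus False
  proof cases
    case 1 thus False using assms off_mono[OF 1] by linarith
  next
    case 2 thus False using assms off_mono[OF 2] by linarith
  qed
qed

lemma P_carrier: "P \<in> carrier_mat n n" using SL unfolding signless_laplacian_def by auto

lemma P_sym: "i < n \<Longrightarrow> j < n \<Longrightarrow> P $$ (j,i) = P $$ (i,j)"
proof -
  assume ij: "i < n" "j < n"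
  have "P\<^sup>T = P" using SL unfolding signless_laplacian_def by auto
  hence "P\<^sup>T $$ (i,j) = P $$ (i,j)" by simp
  thus ?thesis using ij P_carrier by auto
qed

lemma P_off: "i < n \<Longrightarrow> j < n \<Longrightarrow> i \<noteq> j \<Longrightarrow> P $$ (i,j) = 0 \<or> P $$ (i,j) = 1"
  using SL unfolding signless_laplacian_def by auto

lemma P_nonneg: "i < n \<Longrightarrow> j < n \<Longrightarrow> P $$ (i,j) \<ge> 0"
proof (cases "i = j")
  case True
  assume "i < n" thus ?thesis using SL True unfolding signless_laplacian_def by auto
next
  case False
  assume "i < n" "j < n" thus ?thesis using P_off[of i j] False by auto
qed

lemma Delta_vals: "i < n \<Longrightarrow> Delta P i = 0 \<or> Delta P i = 2"
  using SL unfolding signless_laplacian_def by auto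

lemma Delta_eq: "i < n \<Longrightarrow> Delta P i = P $$ (i,i) - (\<Sum>j\<in>{..<n} - {i}. P $$ (i,j))"
proof -
  assume i: "i < n"
  have d: "dim_col P = n" using P_carrier by auto
  have "(\<Sum>j\<in>{0..<dim_col P} - {i}. \<bar>P $$ (i,j)\<bar>) = (\<Sum>j\<in>{..<n} - {i}. P $$ (i,j))"
    unfolding d atLeast0LessThan using i P_nonneg by (intro sum.cong) auto
  thus ?thesis unfolding Delta_def using P_nonneg[OF i i] by simp
qed

lemma gedge_lt: "gedge P i j \<Longrightarrow> i < n \<and> j < n"
  unfolding gedge_def using P_carrier by auto

lemma gedge_sym: "gedge P i j \<Longrightarrow> gedge P j i"
  unfolding gedge_def using P_carrier P_sym by auto

lemma gedge_iff: "i < n \<Longrightarrow> j < n \<Longrightarrow> i \<noteq> j \<Longrightarrow> gedge P i j \<longleftrightarrow> P $$ (i,j) \<noteq> 0"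
  unfolding gedge_def using P_carrier P_off by auto

lemma gloop_iff: "i < n \<Longrightarrow> gloop P i \<longleftrightarrow> Delta P i \<noteq> 0"
  unfolding gloop_def using P_carrier Delta_vals by auto

lemma rtc_sym: "(gedge P)\<^sup>*\<^sup>* a b \<Longrightarrow> (gedge P)\<^sup>*\<^sup>* b a"
  by (induction rule: rtranclp_induct) (auto intro: converse_rtranclp_into_rtranclp gedge_sym)

lemma block_edge:
  assumes k: "k < r" and i: "off ps k \<le> i" "i < off ps (Suc k)" and e: "gedge P i j"
  shows "off ps k \<le> j \<and> j < off ps (Suc k)"
proof -
  have "i \<in> comp P (off ps k)" using blocks k i by auto
  hence "(gedge P)\<^sup>*\<^sup>* (off ps k) j" unfolding comp_def using e by auto
  hence "j \<in> comp P (off ps k)" unfolding comp_def by auto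
  thus ?thesis using blocks k by auto
qed

lemma rest_edge:
  assumes i: "R \<le> i" and e: "gedge P i j" shows "R \<le> j"
proof (rule ccontr)
  assume "\<not> R \<le> j"
  hence "j < R" by simp
  from block_cover[OF this] obtain k where k: "k < r" "off ps k \<le> j" "j < off ps (Suc k)" by auto
  from block_edge[OF k gedge_sym[OF e]] have "i < off ps (Suc k)" by auto
  thus False using i off_le_R[of "Suc k"] by simp
qed


definition "Q f = (\<Sum>i<n. \<Sum>j<n. P $$ (i,j) * f i * f j)"

lemma Q_decomp: "Q f = (\<Sum>i<n. Delta P i * (f i)^2) +
   (\<Sum>i<n. \<Sum>j\<in>{..<n} - {i}. P $$ (i,j) * (f i + f j)^2) / 2"
proof -
  define rs where "rs i = (\<Sum>j<n. P $$ (i,j))" for i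
  have D: "Delta P i = 2 * P $$ (i,i) - rs i" if i: "i < n" for i
  proof -
    have "rs i = P $$ (i,i) + (\<Sum>j\<in>{..<n} - {i}. P $$ (i,j))"
      unfolding rs_def using i by (simp add: sum.remove)
    thus ?thesis using Delta_eq[OF i] by simp
  qed
  have O: "(\<Sum>j\<in>{..<n} - {i}. P $$ (i,j) * (f i + f j)^2) =
      (\<Sum>j<n. P $$ (i,j) * (f i + f j)^2) - 4 * P $$ (i,i) * (f i)^2" if i: "i < n" for i
    using i by (simp add: sum_diff1 power2_eq_square algebra_simps)
  have sw: "(\<Sum>i<n. \<Sum>j<n. P $$ (i,j) * (f j)^2) = (\<Sum>i<n. rs i * (f i)^2)"
  proof -
    have "(\<Sum>i<n. \<Sum>j<n. P $$ (i,j) * (f j)^2) = (\<Sum>j<n. \<Sum>i<n. P $$ (i,j) * (f j)^2)"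
      by (rule sum.swap)
    also have "\<dots> = (\<Sum>j<n. \<Sum>i<n. P $$ (j,i) * (f j)^2)"
      by (intro sum.cong refl, simp add: P_sym)
    also have "\<dots> = (\<Sum>j<n. rs j * (f j)^2)"
      unfolding rs_def by (simp add: sum_distrib_right)
    finally show ?thesis .
  qed
  have sw2: "(\<Sum>i<n. \<Sum>j<n. P $$ (i,j) * (f i)^2) = (\<Sum>i<n. rs i * (f i)^2)"
    unfolding rs_def by (simp add: sum_distrib_right)
  have T: "(\<Sum>i<n. \<Sum>j<n. P $$ (i,j) * (f i + f j)^2) =
      (\<Sum>i<n. \<Sum>j<n. P $$ (i,j) * (f i)^2) + 2 * Q f + (\<Sum>i<n. \<Sum>j<n. P $$ (i,j) * (f j)^2)"
    unfolding Q_def by (simp add: sum.distrib sum_distrib_left power2_eq_square algebra_simps)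
  have "(\<Sum>i<n. \<Sum>j\<in>{..<n} - {i}. P $$ (i,j) * (f i + f j)^2) =
     (\<Sum>i<n. \<Sum>j<n. P $$ (i,j) * (f i + f j)^2) - (\<Sum>i<n. 4 * P $$ (i,i) * (f i)^2)"
    by (simp add: O sum_subtractf)
  moreover have "(\<Sum>i<n. Delta P i * (f i)^2) = (\<Sum>i<n. 2 * P $$ (i,i) * (f i)^2) - (\<Sum>i<n. rs i * (f i)^2)"
    by (simp add: D sum_subtractf algebra_simps)
  moreover have "(\<Sum>i<n. 4 * P $$ (i,i) * (f i)^2) = 2 * (\<Sum>i<n. 2 * P $$ (i,i) * (f i)^2)"
    by (simp add: sum_distrib_left mult.assoc)
  ultimately show ?thesis using T sw sw2 by linarith
qed

lemma Delta_nonneg: "i < n \<Longrightarrow> Delta P i \<ge> 0"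
  using Delta_vals by force

lemma Q_terms_nonneg:
  "i < n \<Longrightarrow> j \<in> {..<n} - {i} \<Longrightarrow> P $$ (i,j) * (f i + f j)^2 \<ge> 0"
  using P_nonneg by auto

lemma Q_nonneg: "Q f \<ge> 0"
  unfolding Q_decomp
  by (intro add_nonneg_nonneg divide_nonneg_pos sum_nonneg mult_nonneg_nonneg Delta_nonneg
      Q_terms_nonneg) auto

lemma Q_zero:
  assumes "Q f = 0"
  shows "(\<forall>i. gloop P i \<longrightarrow> f i = 0) \<and> (\<forall>i j. gedge P i j \<longrightarrow> f j = - f i)"
proof -
  let ?A = "\<Sum>i<n. Delta P i * (f i)^2"
  let ?B = "\<Sum>i<n. \<Sum>j\<in>{..<n} - {i}. P $$ (i,j) * (f i + f j)^2"
  have A: "?A \<ge> 0" by (intro sum_nonneg mult_nonneg_nonneg Delta_nonneg) auto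
  have B: "?B \<ge> 0" by (intro sum_nonneg Q_terms_nonneg) auto
  have "?A + ?B / 2 = 0" using assms Q_decomp by simp
  hence A0: "?A = 0" and B0: "?B = 0" using A B by linarith+
  have nn: "\<forall>x\<in>{..<n}. 0 \<le> Delta P x * (f x)^2"
    by (auto intro: mult_nonneg_nonneg Delta_nonneg)
  have a0: "\<forall>x\<in>{..<n}. Delta P x * (f x)^2 = 0"
    using sum_nonneg_eq_0_iff[of "{..<n}" "\<lambda>i. Delta P i * (f i)^2", OF finite_lessThan] nn A0
    by simp
  have a: "Delta P i * (f i)^2 = 0" if "i < n" for i
    using a0 that by simp
  have nnb: "\<forall>x\<in>{..<n}. 0 \<le> (\<Sum>j\<in>{..<n} - {x}. P $$ (x,j) * (f x + f j)^2)"
    by (auto intro!: sum_nonneg Q_terms_nonneg)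
  have b0: "\<forall>x\<in>{..<n}. (\<Sum>j\<in>{..<n} - {x}. P $$ (x,j) * (f x + f j)^2) = 0"
    using sum_nonneg_eq_0_iff[of "{..<n}" "\<lambda>i. \<Sum>j\<in>{..<n} - {i}. P $$ (i,j) * (f i + f j)^2", OF finite_lessThan] nnb B0
    by simp
  have b1: "(\<Sum>j\<in>{..<n} - {i}. P $$ (i,j) * (f i + f j)^2) = 0" if "i < n" for i
    using b0 that by simp
  have b: "P $$ (i,j) * (f i + f j)^2 = 0" if "i < n" "j < n" "i \<noteq> j" for i j
  proof -
    have nn: "\<forall>x\<in>{..<n} - {i}. 0 \<le> P $$ (i,x) * (f i + f x)^2"
      using Q_terms_nonneg[OF that(1)] by blast
    have "\<forall>x\<in>{..<n} - {i}. P $$ (i,x) * (f i + f x)^2 = 0"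
      using sum_nonneg_eq_0_iff[of "{..<n} - {i}" "\<lambda>j. P $$ (i,j) * (f i + f j)^2"] nn b1[OF that(1)]
      by simp
    thus ?thesis using that by simp
  qed
  show ?thesis
  proof (intro conjI allI impI)
    fix i assume "gloop P i"
    hence "i < n" "Delta P i \<noteq> 0" using P_carrier unfolding gloop_def by auto
    thus "f i = 0" using a by auto
  next
    fix i j assume e: "gedge P i j"
    hence ij: "i < n" "j < n" "i \<noteq> j" "P $$ (i,j) \<noteq> 0" using P_carrier unfolding gedge_def by auto
    hence "(f i + f j)^2 = 0" using b[OF ij(1-3)] by simp
    thus "f j = - f i" by simp
  qed
qed


definition "ec (f :: nat \<Rightarrow> real) \<longleftrightarrow> (\<forall>i. gloop P i \<longrightarrow> f i = 0) \<and> (\<forall>i j. gedge P i j \<longrightarrow> f j = - f i)"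

definition "alt (f :: nat \<Rightarrow> real) \<longleftrightarrow>
  (\<forall>k<r. \<forall>i. off ps k \<le> i \<and> i < off ps k + pp k \<longrightarrow> f i = f (off ps k)) \<and>
  (\<forall>k<r. \<forall>i. off ps k + pp k \<le> i \<and> i < off ps (Suc k) \<longrightarrow> f i = - f (off ps k)) \<and>
  (\<forall>i. R \<le> i \<and> i < n \<longrightarrow> f i = 0)"

lemma Q_zero_ec: "Q f = 0 \<Longrightarrow> ec f"
  using Q_zero unfolding ec_def by blast

lemma bip_k: "k < r \<Longrightarrow> bipartite_with P {off ps k..<off ps (Suc k)} {off ps k..<off ps k + pp k}
   {off ps k + pp k..<off ps (Suc k)}"
  using blocks by auto

lemma comp_k: "k < r \<Longrightarrow> comp P (off ps k) = {off ps k..<off ps (Suc k)}"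
  using blocks by auto

lemma ec_block:
  assumes ec: "ec f" and k: "k < r" and w: "(gedge P)\<^sup>*\<^sup>* (off ps k) w"
  shows "(off ps k \<le> w \<and> w < off ps k + pp k \<longrightarrow> f w = f (off ps k)) \<and>
         (off ps k + pp k \<le> w \<and> w < off ps (Suc k) \<longrightarrow> f w = - f (off ps k))"
  using w
proof (induction rule: rtranclp_induct)
  case base
  then show ?case using pp_pos[OF k] by auto
next
  case (step w w')
  have wC: "w \<in> {off ps k..<off ps (Suc k)}" using step(1) comp_k[OF k] unfolding comp_def by auto
  have "(gedge P)\<^sup>*\<^sup>* (off ps k) w'" using step(1,2) by auto
  hence w'C: "w' \<in> {off ps k..<off ps (Suc k)}" using comp_k[OF k] unfolding comp_def by auto
  have bw: "w \<in> {off ps k..<off ps k + pp k} \<longleftrightarrow> w' \<in> {off ps k + pp k..<off ps (Suc k)}"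
    using bip_k[OF k] wC w'C step(2) unfolding bipartite_with_def by blast
  have fw: "f w' = - f w" using ec step(2) unfolding ec_def by auto
  show ?case using step(3) bw fw wC w'C by auto
qed

lemma ec_loop: "ec f \<Longrightarrow> gloop P i \<Longrightarrow> f i = 0"
  unfolding ec_def by blast

lemma ec_edge: "ec f \<Longrightarrow> gedge P i j \<Longrightarrow> f j = - f i"
  unfolding ec_def by blast

lemma ec_rest:
  assumes ec: "ec f" and i: "R \<le> i" "i < n"
  shows "f i = 0"
proof (rule ccontr)
  assume fi: "f i \<noteq> 0"
  define C where "C = comp P i"
  have ab: "\<bar>f w\<bar> = \<bar>f i\<bar>" if "(gedge P)\<^sup>*\<^sup>* i w" for w
    using that
  proof (induction rule: rtranclp_induct)
    case (step w w')
    have "f w' = - f w" by (rule ec_edge[OF ec step(2)])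
    thus ?case using step(3) by simp
  qed simp
  have nz: "f w \<noteq> 0" if "w \<in> C" for w
  proof -
    have "(gedge P)\<^sup>*\<^sup>* i w" using that unfolding C_def comp_def by simp
    hence "\<bar>f w\<bar> = \<bar>f i\<bar>" by (rule ab)
    thus ?thesis using fi by auto
  qed
  have "bipartite_with P C {w\<in>C. f w > 0} {w\<in>C. f w < 0}"
    unfolding bipartite_with_def
  proof (intro conjI ballI impI)
    show "{w \<in> C. 0 < f w} \<union> {w \<in> C. f w < 0} = C"
      using nz by (auto simp: linorder_neq_iff)
  next
    show "{w \<in> C. 0 < f w} \<inter> {w \<in> C. f w < 0} = {}" by auto
  next
    fix v assume v: "v \<in> C"
    show "\<not> gloop P v" using ec_loop[OF ec, of v] nz[OF v] by blast
  next
    fix u v assume "u \<in> C" "v \<in> C" "gedge P u v"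
    hence "f v = - f u" using ec_edge[OF ec] by blast
    thus "(u \<in> {w \<in> C. 0 < f w}) = (v \<in> {w \<in> C. f w < 0})" using \<open>u \<in> C\<close> \<open>v \<in> C\<close> by auto
  qed
  hence "bipartite P C" unfolding bipartite_def by blast
  moreover have "\<not> bipartite P C" using rest i unfolding C_def by blast
  ultimately show False by blast
qed

lemma alt_A: "alt f \<Longrightarrow> k < r \<Longrightarrow> off ps k \<le> i \<Longrightarrow> i < off ps k + pp k \<Longrightarrow> f i = f (off ps k)"
  unfolding alt_def by blast
lemma alt_B: "alt f \<Longrightarrow> k < r \<Longrightarrow> off ps k + pp k \<le> i \<Longrightarrow> i < off ps (Suc k) \<Longrightarrow> f i = - f (off ps k)"
  unfolding alt_def by blast
lemma alt_R: "alt f \<Longrightarrow> R \<le> i \<Longrightarrow> i < n \<Longrightarrow> f i = 0"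
  unfolding alt_def by blast

lemma ec_alt: "ec f \<Longrightarrow> alt f"
proof -
  assume ec: "ec f"
  have reach: "(gedge P)\<^sup>*\<^sup>* (off ps k) i" if "k < r" "off ps k \<le> i" "i < off ps (Suc k)" for k i
  proof -
    have "i \<in> comp P (off ps k)" using comp_k[OF that(1)] that(2,3) by simp
    thus ?thesis unfolding comp_def by simp
  qed
  show ?thesis unfolding alt_def
  proof (intro conjI allI impI)
    fix k i assume k: "k < r" and i: "off ps k \<le> i \<and> i < off ps k + pp k"
    have "i < off ps (Suc k)" using i off_Suc[OF k] by simp
    hence "(gedge P)\<^sup>*\<^sup>* (off ps k) i" using reach[OF k] i by simp
    from ec_block[OF ec k this] show "f i = f (off ps k)" using i by blast
  next
    fix k i assume k: "k < r" and i: "off ps k + pp k \<le> i \<and> i < off ps (Suc k)"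
    hence "(gedge P)\<^sup>*\<^sup>* (off ps k) i" using reach[OF k] i by simp
    from ec_block[OF ec k this] show "f i = - f (off ps k)" using i by blast
  next
    fix i assume "R \<le> i \<and> i < n"
    thus "f i = 0" using ec_rest[OF ec] by blast
  qed
qed

lemma altP:
  assumes a: "alt f" and i: "i < n"
  shows "(\<Sum>j<n. P $$ (i,j) * f j) = 0"
proof (cases "i < R")
  case True
  from block_cover[OF True] obtain k where k: "k < r" "off ps k \<le> i" "i < off ps (Suc k)" by auto
  have bip: "bipartite_with P {off ps k..<off ps (Suc k)} {off ps k..<off ps k + pp k}
   {off ps k + pp k..<off ps (Suc k)}" by (rule bip_k[OF k(1)])
  have "\<not> gloop P i" using bip k unfolding bipartite_with_def by simp
  hence "Delta P i = 0" using Delta_vals[OF i] i P_carrier unfolding gloop_def by auto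
  hence diag: "P $$ (i,i) = (\<Sum>j\<in>{..<n} - {i}. P $$ (i,j))" using Delta_eq[OF i] by simp
  have tm: "P $$ (i,j) * f j = - (P $$ (i,j) * f i)" if j: "j \<in> {..<n} - {i}" for j
  proof (cases "P $$ (i,j) = 0")
    case False
    have "j < n" "j \<noteq> i" using j by auto
    hence e: "gedge P i j" using False i P_carrier P_off[of i j] unfolding gedge_def by auto
    have jk: "off ps k \<le> j \<and> j < off ps (Suc k)" by (rule block_edge[OF k e])
    have iff: "i \<in> {off ps k..<off ps k + pp k} \<longleftrightarrow> j \<in> {off ps k + pp k..<off ps (Suc k)}"
      using bip k jk e unfolding bipartite_with_def by simp
    have "f j = - f i"
    proof (cases "i < off ps k + pp k")
      case True
      hence "off ps k + pp k \<le> j" using iff k by simp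
      thus ?thesis using alt_A[OF a k(1) k(2) True] alt_B[OF a k(1) _] jk by simp
    next
      case False
      hence jA: "j < off ps k + pp k" using iff k jk by auto
      thus ?thesis using alt_A[OF a k(1) _ jA] alt_B[OF a k(1) _ k(3)] jk False by simp
    qed
    thus ?thesis by simp
  qed simp
  have "(\<Sum>j<n. P $$ (i,j) * f j) = P $$ (i,i) * f i + (\<Sum>j\<in>{..<n} - {i}. P $$ (i,j) * f j)"
    using i by (simp add: sum.remove)
  also have "(\<Sum>j\<in>{..<n} - {i}. P $$ (i,j) * f j) = - ((\<Sum>j\<in>{..<n} - {i}. P $$ (i,j)) * f i)"
    by (simp add: tm sum_negf sum_distrib_right)
  finally show ?thesis using diag by simp
next
  case False
  have fi: "f i = 0" using alt_R[OF a _ i] False by simp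
  have "P $$ (i,j) * f j = 0" if j: "j < n" for j
  proof (cases "j = i \<or> P $$ (i,j) = 0")
    case True thus ?thesis using fi by auto
  next
    case False
    hence e: "gedge P i j" using j i P_carrier P_off[of i j] unfolding gedge_def by auto
    have "R \<le> j" using rest_edge[OF _ e] \<open>\<not> i < R\<close> by simp
    thus ?thesis using alt_R[OF a _ j] by simp
  qed
  hence "(\<Sum>j<n. P $$ (i,j) * f j) = (\<Sum>j<n. 0)" by (intro sum.cong) auto
  thus ?thesis by simp
qed

end


context setting begin

abbreviation "sR \<equiv> n - R"
abbreviation "U \<equiv> Umat ps (n - R)"
definition "co k = sum_list (map (\<lambda>(p,q). p + q - 1) (take k ps))"
abbreviation "As \<equiv> map (\<lambda>(p,q). Ublock p q) ps @ [1\<^sub>m (n - R)]"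
abbreviation "CR \<equiv> sum_list (map (\<lambda>(p,q). p + q - 1) ps)"
abbreviation "m \<equiv> CR + (n - R)"

lemma comp_dims[simp]: "dim_row \<circ> (\<lambda>(x,y). Ublock x y) = (\<lambda>(p,q). p + q)"
   "dim_col \<circ> (\<lambda>(x,y). Ublock x y) = (\<lambda>(p,q). p + q - 1)"
  by (auto simp: fun_eq_iff)

lemma map_dims: "map dim_row (map (\<lambda>(p,q). Ublock p q) xs) = map (\<lambda>(p,q). p + q) xs"
   "map dim_col (map (\<lambda>(p,q). Ublock p q) xs) = map (\<lambda>(p,q). p + q - 1) xs"
  by (simp_all only: map_map comp_dims)

lemma As_roff: "k \<le> r \<Longrightarrow> roff As k = off ps k"
  unfolding roff_def off_def by (simp add: take_map map_dims)

lemma As_coff: "k \<le> r \<Longrightarrow> coff As k = co k"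
  unfolding coff_def co_def by (simp add: take_map map_dims)

lemma As_roff_end: "roff As (Suc r) = n"
  unfolding roff_def using size by (simp add: map_dims)

lemma As_coff_end: "coff As (Suc r) = m"
  unfolding coff_def co_def by (simp add: map_dims)

lemma U_dims: "dim_row U = n" "dim_col U = m"
proof -
  show "dim_row U = n" unfolding Umat_def dim_diag_block_mat using size by (simp add: map_dims)
  show "dim_col U = m" unfolding Umat_def dim_diag_block_mat co_def by (simp add: map_dims)
qed

lemma U_carrier: "U \<in> carrier_mat n m" using U_dims by auto

lemma co_Suc: "k < r \<Longrightarrow> co (Suc k) = co k + (pp k + qq k - 1)"
  unfolding co_def by (simp add: take_Suc_conv_app_nth split: prod.splits)

lemma co_ge: "k \<ge> r \<Longrightarrow> co k = CR"
  unfolding co_def by simp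

lemma co_Suc_le: "co k \<le> co (Suc k)"
  by (cases "k < r") (auto simp: co_Suc co_ge)

lemma co_mono: "k \<le> k' \<Longrightarrow> co k \<le> co k'"
  by (induction k' rule: dec_induct) (auto intro: order_trans[OF _ co_Suc_le])

lemma co_r: "co r = CR" using co_ge by simp

lemma co_le_r: "co k \<le> CR"
  using co_mono[of k "max k r"] co_ge[of "max k r"] by simp

lemma co_0: "co 0 = 0" unfolding co_def by simp

lemma U_block:
  assumes k: "k < r" and i: "off ps k \<le> i" "i < off ps (Suc k)" and j: "j < m"
  shows "U $$ (i,j) = (if co k \<le> j \<and> j < co (Suc k) then Ublock (pp k) (qq k) $$ (i - off ps k, j - co k) else 0)"
proof -
  have e: "As ! k = Ublock (pp k) (qq k)" using k by (simp add: nth_append split: prod.splits)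
  have k1: "k < length As" using k by simp
  have r1: "roff As k \<le> i" using As_roff[of k] k i by simp
  have r2: "i < roff As (Suc k)" using As_roff[of "Suc k"] k i by simp
  have jj: "j < dim_col (diag_block_mat As)" using j U_dims unfolding Umat_def by simp
  have "U $$ (i,j) = (if coff As k \<le> j \<and> j < coff As (Suc k)
      then (As ! k) $$ (i - roff As k, j - coff As k) else 0)"
    unfolding Umat_def by (rule diag_block_entry[OF k1 r1 r2 jj])
  thus ?thesis using k e As_roff[of k] As_coff[of k] As_coff[of "Suc k"] by simp
qed

lemma U_rest:
  assumes i: "R \<le> i" "i < n" and j: "j < m"
  shows "U $$ (i,j) = (if CR \<le> j \<and> j - CR = i - R then 1 else 0)"
proof -
  have e: "As ! r = 1\<^sub>m (n - R)" by (simp add: nth_append)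
  have k1: "r < length As" by simp
  have r1: "roff As r \<le> i" using As_roff[of r] off_ge[of r] i by simp
  have r2: "i < roff As (Suc r)" using As_roff_end i by simp
  have jj: "j < dim_col (diag_block_mat As)" using j U_dims unfolding Umat_def by simp
  have "U $$ (i,j) = (if coff As r \<le> j \<and> j < coff As (Suc r)
      then (As ! r) $$ (i - roff As r, j - coff As r) else 0)"
    unfolding Umat_def by (rule diag_block_entry[OF k1 r1 r2 jj])
  moreover have c1: "coff As r = CR" using As_coff[of r] co_r by simp
  moreover have "roff As r = R" using As_roff[of r] off_ge[of r] by simp
  ultimately have U1: "U $$ (i,j) = (if CR \<le> j then 1\<^sub>m (n - R) $$ (i - R, j - CR) else 0)"
    using e As_coff_end j by simp
  show ?thesis
  proof (cases "CR \<le> j")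
    case True
    have "i - R < n - R" "j - CR < n - R" using i j True by auto
    thus ?thesis using U1 True by simp
  qed (use U1 in simp)
qed

definition "sg k b = (if 1 + b < pp k then -1 else (1::real))"

lemma co_unique:
  assumes "co k \<le> j" "j < co (Suc k)" "co k' \<le> j" "j < co (Suc k')"
  shows "k = k'"
proof (rule ccontr)
  assume "k \<noteq> k'"
  then consider "Suc k \<le> k'" | "Suc k' \<le> k" by linarith
  thus False
  proof cases
    case 1 thus False using assms co_mono[OF 1] by linarith
  next
    case 2 thus False using assms co_mono[OF 2] by linarith
  qed
qed

lemma m_ge: "co k \<le> m" using co_le_r[of k] by simp

lemma colU_block:
  assumes k: "k < r" and j: "co k \<le> j" "j < co (Suc k)" and i: "i < n"
  shows "U $$ (i,j) = (if i = off ps k then 1 else 0) +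
           (if i = off ps k + 1 + (j - co k) then sg k (j - co k) else 0)"
proof -
  define b where "b = j - co k"
  have jm: "j < m" using j m_ge[of "Suc k"] by simp
  have b: "b < pp k + qq k - 1" using j co_Suc[OF k] unfolding b_def by simp
  have os: "off ps (Suc k) = off ps k + pp k + qq k" by (rule off_Suc[OF k])
  have ppk: "pp k \<ge> 1" by (rule pp_pos[OF k])
  show ?thesis
  proof (cases "i < R")
    case True
    from block_cover[OF True] obtain k' where k': "k' < r" "off ps k' \<le> i" "i < off ps (Suc k')" by auto
    show ?thesis
    proof (cases "k' = k")
      case True
      have a: "i - off ps k < pp k + qq k" using k' True os by simp
      have "U $$ (i,j) = Ublock (pp k) (qq k) $$ (i - off ps k, b)"
        using U_block[OF k, of i j] k' True j jm unfolding b_def by simp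
      also have "\<dots> = (if i - off ps k = 0 then 1 else if b = i - off ps k - 1 then
          (if i - off ps k < pp k then -1 else 1) else 0)"
        by (rule Ublock_entry[OF a b])
      finally show ?thesis using k' True unfolding b_def[symmetric] sg_def by auto
    next
      case False
      have "\<not> (co k' \<le> j \<and> j < co (Suc k'))" using co_unique[of k j k'] j False by auto
      hence "U $$ (i,j) = 0" using U_block[OF k'(1) k'(2,3) jm] by presburger
      moreover have "\<not> (off ps k \<le> i \<and> i < off ps (Suc k))"
        using block_unique[of k i k'] k' False by auto
      ultimately show ?thesis using b os unfolding b_def[symmetric] by auto
    qed
  next
    case False
    have "co (Suc k) \<le> CR" by (rule co_le_r)
    hence "U $$ (i,j) = 0" using U_rest[of i j] False i jm j by simp
    moreover have "off ps (Suc k) \<le> R" by (rule off_le_R)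
    ultimately show ?thesis using b os False unfolding b_def[symmetric] by auto
  qed
qed

lemma colU_rest:
  assumes j: "CR \<le> j" "j < m" and i: "i < n"
  shows "U $$ (i,j) = (if i = R + (j - CR) then 1 else 0)"
proof (cases "i < R")
  case True
  from block_cover[OF True] obtain k' where k': "k' < r" "off ps k' \<le> i" "i < off ps (Suc k')" by auto
  have "co (Suc k') \<le> CR" by (rule co_le_r)
  hence "U $$ (i,j) = 0" using U_block[OF k'(1) k'(2,3) j(2)] j by simp
  thus ?thesis using True by simp
next
  case False
  thus ?thesis using U_rest[OF _ i j(2)] j by auto
qed

lemma sum_two_delta:
  assumes "a < n" "b < n" "a \<noteq> b"
  shows "(\<Sum>i<n. ((if i = a then 1 else 0) + (if i = b then c else 0)) * (v i :: real)) = v a + c * v b"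
proof -
  have "(\<Sum>i<n. ((if i = a then 1 else 0) + (if i = b then c else 0)) * v i) =
     (\<Sum>i<n. (if i = a then v i else 0)) + (\<Sum>i<n. (if i = b then c * v i else 0))"
    by (simp add: sum.distrib distrib_right if_distrib[of "\<lambda>x. x * v _"] cong: if_cong)
  thus ?thesis using assms by simp
qed

lemma UTv_block:
  assumes k: "k < r" and j: "co k \<le> j" "j < co (Suc k)"
  shows "(\<Sum>i<n. U $$ (i,j) * v i) = v (off ps k) + sg k (j - co k) * v (off ps k + 1 + (j - co k))"
proof -
  have b: "j - co k < pp k + qq k - 1" using j co_Suc[OF k] by simp
  have os: "off ps (Suc k) = off ps k + pp k + qq k" by (rule off_Suc[OF k])
  have lt: "off ps k + 1 + (j - co k) < n" using b os off_le_R[of "Suc k"] size by simp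
  have "(\<Sum>i<n. U $$ (i,j) * v i) = (\<Sum>i<n. ((if i = off ps k then 1 else 0) +
           (if i = off ps k + 1 + (j - co k) then sg k (j - co k) else 0)) * v i)"
    using colU_block[OF k j] by simp
  also have "\<dots> = v (off ps k) + sg k (j - co k) * v (off ps k + 1 + (j - co k))"
    by (rule sum_two_delta) (use lt in auto)
  finally show ?thesis .
qed

lemma UTv_rest:
  assumes j: "CR \<le> j" "j < m"
  shows "(\<Sum>i<n. U $$ (i,j) * v i) = v (R + (j - CR))"
proof -
  have lt: "R + (j - CR) < n" using j size by simp
  have "(\<Sum>i<n. U $$ (i,j) * v i) = (\<Sum>i<n. if i = R + (j - CR) then v i else 0)"
    using colU_rest[OF j] by (intro sum.cong) auto
  thus ?thesis using lt by simp
qed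

lemma col_cover: "j < m \<Longrightarrow> (\<exists>k<r. co k \<le> j \<and> j < co (Suc k)) \<or> CR \<le> j"
proof (cases "j < CR")
  case True
  hence "j < co r" using co_r by simp
  from interval_cover[of co, OF co_0 this] show ?thesis by blast
qed simp

lemma rowU_block:
  assumes k: "k < r" and b: "b < pp k + qq k - 1" and j: "j < m"
  shows "U $$ (off ps k + 1 + b, j) = (if j = co k + b then sg k b else 0)"
proof -
  have os: "off ps (Suc k) = off ps k + pp k + qq k" by (rule off_Suc[OF k])
  have cs: "co (Suc k) = co k + (pp k + qq k - 1)" by (rule co_Suc[OF k])
  have i: "off ps k \<le> off ps k + 1 + b" "off ps k + 1 + b < off ps (Suc k)" using b os by auto
  show ?thesis
  proof (cases "co k \<le> j \<and> j < co (Suc k)")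
    case True
    have "U $$ (off ps k + 1 + b, j) = Ublock (pp k) (qq k) $$ (1 + b, j - co k)"
      using U_block[OF k i j] True by simp
    also have "\<dots> = (if j - co k = b then sg k b else 0)"
      using Ublock_entry[of "1 + b" "pp k" "qq k" "j - co k"] b True cs unfolding sg_def by auto
    finally show ?thesis using True by auto
  next
    case False
    thus ?thesis using U_block[OF k i j] b cs by auto
  qed
qed

lemma rowU_rest:
  assumes ii: "ii < n - R" and j: "j < m"
  shows "U $$ (R + ii, j) = (if j = CR + ii then 1 else 0)"
  using U_rest[of "R + ii" j] ii j by auto

definition "kf k i = (if off ps k \<le> i \<and> i < off ps k + pp k then 1
   else if off ps k + pp k \<le> i \<and> i < off ps (Suc k) then -1 else (0::real))"

lemma kf_zero: "k < r \<Longrightarrow> \<not> (off ps k \<le> i \<and> i < off ps (Suc k)) \<Longrightarrow> kf k i = 0"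
  using off_Suc[of k] unfolding kf_def by auto

lemma kf_off: "k < r \<Longrightarrow> kf k (off ps k) = 1"
  using pp_pos[of k] unfolding kf_def by auto

lemma in_block_other:
  assumes "k < r" "k' < r" "k' \<noteq> k" "off ps k' \<le> i" "i < off ps (Suc k')"
  shows "kf k i = 0"
proof (rule kf_zero[OF assms(1)])
  show "\<not> (off ps k \<le> i \<and> i < off ps (Suc k))"
    using block_unique[of k i k'] assms by auto
qed

lemma off_in_block: "k < r \<Longrightarrow> off ps k \<le> off ps k \<and> off ps k < off ps (Suc k)"
  using off_Suc[of k] pp_pos[of k] by simp

lemma alt_kf: assumes k: "k < r" shows "alt (kf k)"
  unfolding alt_def
proof (intro conjI allI impI)
  fix k' i assume k': "k' < r" and i: "off ps k' \<le> i \<and> i < off ps k' + pp k'"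
  have ib: "i < off ps (Suc k')" using i off_Suc[OF k'] by simp
  show "kf k i = kf k (off ps k')"
  proof (cases "k' = k")
    case True thus ?thesis using i kf_off[OF k] unfolding kf_def by auto
  next
    case False
    thus ?thesis using in_block_other[OF k k' False] i ib off_in_block[OF k'] by metis
  qed
next
  fix k' i assume k': "k' < r" and i: "off ps k' + pp k' \<le> i \<and> i < off ps (Suc k')"
  show "kf k i = - kf k (off ps k')"
  proof (cases "k' = k")
    case True thus ?thesis using i kf_off[OF k] pp_pos[OF k] unfolding kf_def by auto
  next
    case False
    have "off ps k' \<le> i" using i by simp
    thus ?thesis using in_block_other[OF k k' False] i off_in_block[OF k'] by (metis neg_0_equal_iff_equal)
  qed
next
  fix i assume "R \<le> i \<and> i < n"
  moreover have "off ps (Suc k) \<le> R" by (rule off_le_R)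
  ultimately show "kf k i = 0" using kf_zero[OF k] by auto
qed

lemma KTU:
  assumes k: "k < r" and j: "j < m"
  shows "(\<Sum>i<n. U $$ (i,j) * kf k i) = 0"
proof -
  from col_cover[OF j] show ?thesis
  proof
    assume "\<exists>k'<r. co k' \<le> j \<and> j < co (Suc k')"
    then obtain k' where k': "k' < r" "co k' \<le> j" "j < co (Suc k')" by auto
    define b where "b = j - co k'"
    have b: "b < pp k' + qq k' - 1" using k' co_Suc[OF k'(1)] unfolding b_def by simp
    have os: "off ps (Suc k') = off ps k' + pp k' + qq k'" by (rule off_Suc[OF k'(1)])
    have e: "(\<Sum>i<n. U $$ (i,j) * kf k i) = kf k (off ps k') + sg k' b * kf k (off ps k' + 1 + b)"
      using UTv_block[OF k'] unfolding b_def by simp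
    show ?thesis
    proof (cases "k' = k")
      case True
      thus ?thesis using e kf_off[OF k] b os pp_pos[OF k] unfolding kf_def sg_def by auto
    next
      case False
      have "kf k (off ps k') = 0" using in_block_other[OF k k'(1) False] off_in_block[OF k'(1)] by blast
      moreover have "kf k (off ps k' + 1 + b) = 0" using in_block_other[OF k k'(1) False] b os by simp
      ultimately show ?thesis using e by simp
    qed
  next
    assume c: "CR \<le> j"
    have e: "(\<Sum>i<n. U $$ (i,j) * kf k i) = kf k (R + (j - CR))" using UTv_rest[OF c j] by simp
    have "off ps (Suc k) \<le> R" by (rule off_le_R)
    thus ?thesis using e kf_zero[OF k] by simp
  qed
qed

lemma UT_alt:
  assumes z: "\<forall>j<m. (\<Sum>i<n. U $$ (i,j) * v i) = 0"
  shows "alt v"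
  unfolding alt_def
proof (intro conjI allI impI)
  fix k i assume k: "k < r" and i: "off ps k \<le> i \<and> i < off ps k + pp k"
  show "v i = v (off ps k)"
  proof (cases "i = off ps k")
    case False
    define b where "b = i - off ps k - 1"
    have ib: "i = off ps k + 1 + b" using i False unfolding b_def by auto
    have bl: "1 + b < pp k" using i ib by simp
    have cs: "co (Suc k) = co k + (pp k + qq k - 1)" by (rule co_Suc[OF k])
    have jj: "co k \<le> co k + b" "co k + b < co (Suc k)" using bl cs by auto
    have jm: "co k + b < m" using jj m_ge[of "Suc k"] by simp
    have "v (off ps k) + sg k b * v i = 0" using UTv_block[OF k jj, of v] z jm ib by simp
    thus ?thesis using bl unfolding sg_def by simp
  qed simp
next
  fix k i assume k: "k < r" and i: "off ps k + pp k \<le> i \<and> i < off ps (Suc k)"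
  define b where "b = i - off ps k - 1"
  have pk: "pp k \<ge> 1" by (rule pp_pos[OF k])
  have os: "off ps (Suc k) = off ps k + pp k + qq k" by (rule off_Suc[OF k])
  have ib: "i = off ps k + 1 + b" using i pk unfolding b_def by auto
  have bl: "\<not> 1 + b < pp k" using i ib by simp
  have cs: "co (Suc k) = co k + (pp k + qq k - 1)" by (rule co_Suc[OF k])
  have jj: "co k \<le> co k + b" "co k + b < co (Suc k)" using i ib os cs by auto
  have jm: "co k + b < m" using jj m_ge[of "Suc k"] by simp
  have "v (off ps k) + sg k b * v i = 0" using UTv_block[OF k jj, of v] z jm ib by simp
  thus "v i = - v (off ps k)" using bl unfolding sg_def by simp
next
  fix i assume i: "R \<le> i \<and> i < n"
  have jm: "CR + (i - R) < m" "CR \<le> CR + (i - R)" using i by auto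
  have "v (R + (CR + (i - R) - CR)) = 0" using UTv_rest[OF jm(2) jm(1), of v] z jm by simp
  thus "v i = 0" using i by simp
qed

lemma kernel:
  assumes ec: "ec f" and z: "\<forall>k<r. (\<Sum>i<n. kf k i * f i) = 0" and i: "i < n"
  shows "f i = 0"
proof -
  have a: "alt f" by (rule ec_alt[OF ec])
  have off0: "f (off ps k) = 0" if k: "k < r" for k
  proof -
    have os: "off ps (Suc k) = off ps k + pp k + qq k" by (rule off_Suc[OF k])
    have t: "kf k i * f i = (if off ps k \<le> i \<and> i < off ps (Suc k) then f (off ps k) else 0)" for i
      using alt_A[OF a k, of i] alt_B[OF a k, of i] os unfolding kf_def by auto
    have le: "off ps (Suc k) \<le> n" using off_le_R[of "Suc k"] size by simp
    have "(\<Sum>i<n. kf k i * f i) = (\<Sum>i<n. if off ps k \<le> i \<and> i < off ps (Suc k) then f (off ps k) else 0)"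
      by (simp add: t)
    also have "\<dots> = (\<Sum>i\<in>{i\<in>{..<n}. off ps k \<le> i \<and> i < off ps (Suc k)}. f (off ps k))"
      by (rule sum.inter_filter[symmetric]) simp
    also have "{i\<in>{..<n}. off ps k \<le> i \<and> i < off ps (Suc k)} = {off ps k..<off ps (Suc k)}"
      using le by auto
    also have "(\<Sum>i\<in>{off ps k..<off ps (Suc k)}. f (off ps k)) = real (pp k + qq k) * f (off ps k)"
      using os by simp
    finally have "real (pp k + qq k) * f (off ps k) = 0" using z k by simp
    moreover have "pp k + qq k > 0" using pp_pos[OF k] by simp
    ultimately show ?thesis by simp
  qed
  show ?thesis
  proof (cases "i < R")
    case True
    from block_cover[OF True] obtain k where k: "k < r" "off ps k \<le> i" "i < off ps (Suc k)" by auto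
    show ?thesis
    proof (cases "i < off ps k + pp k")
      case True thus ?thesis using alt_A[OF a k(1) k(2) True] off0[OF k(1)] by simp
    next
      case False thus ?thesis using alt_B[OF a k(1) _ k(3)] off0[OF k(1)] by simp
    qed
  next
    case False thus ?thesis using alt_R[OF a _ i] by simp
  qed
qed

lemma U_inj:
  assumes z: "\<forall>i<n. (\<Sum>j<m. U $$ (i,j) * x j) = 0" and j: "j < m"
  shows "x j = 0"
proof -
  from col_cover[OF j] show ?thesis
  proof
    assume "\<exists>k<r. co k \<le> j \<and> j < co (Suc k)"
    then obtain k where k: "k < r" "co k \<le> j" "j < co (Suc k)" by auto
    define b where "b = j - co k"
    have b: "b < pp k + qq k - 1" using k co_Suc[OF k(1)] unfolding b_def by simp
    have os: "off ps (Suc k) = off ps k + pp k + qq k" by (rule off_Suc[OF k(1)])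
    have lt: "off ps k + 1 + b < n" using b os off_le_R[of "Suc k"] size by simp
    have "(\<Sum>j'<m. U $$ (off ps k + 1 + b, j') * x j') = (\<Sum>j'<m. if j' = co k + b then sg k b * x j' else 0)"
      using rowU_block[OF k(1) b] by (intro sum.cong) auto
    also have "\<dots> = sg k b * x j" using j k unfolding b_def by simp
    finally have "sg k b * x j = 0" using z lt by simp
    moreover have "sg k b \<noteq> 0" unfolding sg_def by simp
    ultimately show ?thesis by simp
  next
    assume c: "CR \<le> j"
    have lt: "R + (j - CR) < n" using j c size by simp
    have "(\<Sum>j'<m. U $$ (R + (j - CR), j') * x j') = (\<Sum>j'<m. if j' = CR + (j - CR) then x j' else 0)"
      using rowU_rest[of "j - CR"] j c by (intro sum.cong) auto
    also have "\<dots> = x j" using j c by simp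
    finally show ?thesis using z lt by simp
  qed
qed

end


no_notation vec_nth (infixl \<open>$\<close> 90)

lemma sq_pos:
  assumes v: "v \<in> carrier_vec n" and nz: "v \<noteq> 0\<^sub>v n"
  shows "(\<Sum>i<n. (v $ i)^2) > (0::real)"
proof -
  obtain i where i: "i < n" "v $ i \<noteq> 0"
    using nz v by (metis carrier_vecD eq_vecI index_zero_vec(1) index_zero_vec(2))
  have "(v $ i)^2 \<le> (\<Sum>i<n. (v $ i)^2)"
    by (rule member_le_sum) (use i in auto)
  moreover have "(v $ i)^2 > 0" using i by simp
  ultimately show ?thesis by linarith
qed

lemma self_sp: "(v :: real vec) \<in> carrier_vec n \<Longrightarrow> v \<bullet> v = (\<Sum>i<n. (v $ i)^2)"
  by (simp add: scalar_prod_def atLeast0LessThan power2_eq_square)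

context setting begin

lemma qS: "(\<Sum>i<n. \<Sum>j<n. S $$ (i,j) * v i * v j) = \<alpha> * (\<Sum>i<n. (v i)^2) + l * (\<Sum>i<n. v i)^2"
proof -
  have "(\<Sum>i<n. \<Sum>j<n. S $$ (i,j) * v i * v j) =
      (\<Sum>i<n. \<Sum>j<n. (if i = j then \<alpha> * v i * v j else 0) + l * (v i * v j))"
    by (intro sum.cong refl) (auto simp: S_entry algebra_simps)
  also have "\<dots> = (\<Sum>i<n. \<Sum>j<n. (if i = j then \<alpha> * v i * v j else 0)) + (\<Sum>i<n. \<Sum>j<n. l * (v i * v j))"
    by (simp add: sum.distrib)
  also have "(\<Sum>i<n. \<Sum>j<n. l * (v i * v j)) = l * ((\<Sum>i<n. v i) * (\<Sum>j<n. v j))"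
  proof -
    have "(\<Sum>j<n. l * (v i * v j)) = (l * v i) * (\<Sum>j<n. v j)" for i
      by (simp add: sum_distrib_left mult.assoc)
    hence "(\<Sum>i<n. \<Sum>j<n. l * (v i * v j)) = (\<Sum>i<n. (l * v i) * (\<Sum>j<n. v j))" by simp
    also have "\<dots> = (\<Sum>i<n. l * v i) * (\<Sum>j<n. v j)" by (rule sum_distrib_right[symmetric])
    also have "(\<Sum>i<n. l * v i) = l * (\<Sum>i<n. v i)" by (rule sum_distrib_left[symmetric])
    also have "l * (\<Sum>i<n. v i) * (\<Sum>j<n. v j) = l * ((\<Sum>i<n. v i) * (\<Sum>j<n. v j))" by simp
    finally show ?thesis .
  qed
  also have "(\<Sum>i<n. \<Sum>j<n. (if i = j then \<alpha> * v i * v j else 0)) = (\<Sum>i<n. \<alpha> * v i * v i)"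
    by simp
  also have "(\<Sum>i<n. \<alpha> * v i * v i) = \<alpha> * (\<Sum>i<n. (v i)^2)"
    by (simp add: sum_distrib_left power2_eq_square mult.assoc)
  also have "(\<Sum>i<n. v i) * (\<Sum>j<n. v j) = (\<Sum>i<n. v i)^2"
    by (simp add: power2_eq_square)
  finally show ?thesis .
qed

lemma SP_carrier: "S + t \<cdot>\<^sub>m P \<in> carrier_mat n n"
  using S_carrier P_carrier by auto

lemma form_SP:
  assumes t: "t \<ge> 0" and v: "v \<in> carrier_vec n"
  shows "v \<bullet> ((S + t \<cdot>\<^sub>m P) *\<^sub>v v) \<ge> \<alpha> * (\<Sum>i<n. (v $ i)^2)"
proof -
  have "v \<bullet> ((S + t \<cdot>\<^sub>m P) *\<^sub>v v) = (\<Sum>i<n. \<Sum>j<n. (S + t \<cdot>\<^sub>m P) $$ (i,j) * v $ i * v $ j)"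
    by (rule quad_form[OF SP_carrier v])
  also have "\<dots> = (\<Sum>i<n. \<Sum>j<n. S $$ (i,j) * v $ i * v $ j) + t * Q (\<lambda>i. v $ i)"
    unfolding Q_def using S_carrier P_carrier
    by (simp add: sum.distrib sum_distrib_left algebra_simps)
  also have "\<dots> = \<alpha> * (\<Sum>i<n. (v $ i)^2) + l * (\<Sum>i<n. v $ i)^2 + t * Q (\<lambda>i. v $ i)"
    using qS[of "\<lambda>i. v $ i"] by simp
  finally show ?thesis using Q_nonneg[of "\<lambda>i. v $ i"] t lpos
    by (smt (verit) mult_nonneg_nonneg zero_le_power2)
qed

lemma form_SP_pos:
  assumes t: "t \<ge> 0" and v: "v \<in> carrier_vec n" and nz: "v \<noteq> 0\<^sub>v n"
  shows "v \<bullet> ((S + t \<cdot>\<^sub>m P) *\<^sub>v v) > 0"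
  using form_SP[OF t v] sq_pos[OF v nz] apos by (smt (verit) mult_pos_pos)

lemma SP_inv:
  assumes t: "t \<ge> 0"
  shows "minv (S + t \<cdot>\<^sub>m P) \<in> carrier_mat n n \<and> (S + t \<cdot>\<^sub>m P) * minv (S + t \<cdot>\<^sub>m P) = 1\<^sub>m n
    \<and> minv (S + t \<cdot>\<^sub>m P) * (S + t \<cdot>\<^sub>m P) = 1\<^sub>m n"
proof (rule minv_det[OF SP_carrier], rule inj_det[OF SP_carrier])
  fix v :: "real vec" assume v: "v \<in> carrier_vec n" and z: "(S + t \<cdot>\<^sub>m P) *\<^sub>v v = 0\<^sub>v n"
  show "v = 0\<^sub>v n"
  proof (rule ccontr)
    assume "v \<noteq> 0\<^sub>v n"
    from form_SP_pos[OF t v this] z v show False by simp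
  qed
qed

lemma Si_pos:
  assumes v: "v \<in> carrier_vec n" and nz: "v \<noteq> 0\<^sub>v n"
  shows "v \<bullet> (Si *\<^sub>v v) > 0"
proof -
  define w where "w = Si *\<^sub>v v"
  have w: "w \<in> carrier_vec n" unfolding w_def using Si_carrier v by auto
  have Sw: "S *\<^sub>v w = v" unfolding w_def using S_carrier Si_carrier v
    by (simp add: assoc_mult_mat_vec[symmetric] S_Si)
  have "w \<noteq> 0\<^sub>v n" using Sw nz S_carrier by auto
  hence "w \<bullet> ((S + 0 \<cdot>\<^sub>m P) *\<^sub>v w) > 0" using form_SP_pos[of 0 w] w by simp
  moreover have "S + 0 \<cdot>\<^sub>m P = S" using S_carrier P_carrier by auto
  ultimately have "w \<bullet> (S *\<^sub>v w) > 0" by simp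
  also have "w \<bullet> (S *\<^sub>v w) = v \<bullet> w" using Sw w v comm_scalar_prod[OF w v] by simp
  finally show ?thesis unfolding w_def .
qed

lemma col_mult_vec: "A \<in> carrier_mat nr nk \<Longrightarrow> B \<in> carrier_mat nk nc \<Longrightarrow> j < nc \<Longrightarrow>
   col (A * B) j = A *\<^sub>v col B j"
  by (rule eq_vecI) auto

lemma M_bound:
  assumes t: "t \<ge> 0" and i: "i < n" and j: "j < n"
  shows "\<bar>minv (S + t \<cdot>\<^sub>m P) $$ (i,j)\<bar> \<le> 1 / \<alpha>"
proof -
  let ?A = "S + t \<cdot>\<^sub>m P"
  let ?M = "minv ?A"
  have M: "?M \<in> carrier_mat n n" "?A * ?M = 1\<^sub>m n" using SP_inv[OF t] by auto
  define x where "x = col ?M j"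
  have x: "x \<in> carrier_vec n" unfolding x_def using M j by auto
  have Ax: "?A *\<^sub>v x = unit_vec n j"
    unfolding x_def using col_mult_vec[OF SP_carrier[of t] M(1) j] M(2) j by simp
  have "x \<bullet> (?A *\<^sub>v x) = x $ j" using Ax j by simp
  hence xj: "x $ j \<ge> \<alpha> * (\<Sum>k<n. (x $ k)^2)" using form_SP[OF t x] by simp
  define T where "T = (\<Sum>k<n. (x $ k)^2)"
  have Tj: "(x $ j)^2 \<le> T" unfolding T_def by (rule member_le_sum) (use j in auto)
  have Ti: "(x $ i)^2 \<le> T" unfolding T_def by (rule member_le_sum) (use i in auto)
  have T0: "T \<ge> 0" unfolding T_def by (simp add: sum_nonneg)
  have a: "\<alpha> > 0" by (rule apos)
  have "(x $ i)^2 \<le> (1/\<alpha>)^2"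
  proof (cases "T = 0")
    case True thus ?thesis using Ti by simp
  next
    case False
    hence Tp: "T > 0" using T0 by simp
    have "\<alpha> * T \<le> x $ j" using xj unfolding T_def by simp
    moreover have "0 \<le> \<alpha> * T" using a T0 by simp
    ultimately have "(\<alpha> * T)^2 \<le> (x $ j)^2" by (rule power_mono)
    hence "(\<alpha> * T)^2 \<le> T" using Tj by simp
    hence "\<alpha>^2 * T * T \<le> 1 * T" by (simp add: power2_eq_square algebra_simps)
    hence "\<alpha>^2 * T \<le> 1" using Tp by simp
    hence "T \<le> 1 / \<alpha>^2" using a by (simp add: field_simps)
    thus ?thesis using Ti by (simp add: power_divide)
  qed
  hence "\<bar>x $ i\<bar> \<le> 1 / \<alpha>"
  proof -
    assume h: "(x $ i)^2 \<le> (1/\<alpha>)^2"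
    have "\<bar>x $ i\<bar>^2 \<le> (1/\<alpha>)^2" using h by simp
    thus ?thesis by (rule power2_le_imp_le) (use a in simp)
  qed
  thus ?thesis unfolding x_def using M i j by simp
qed

lemma mult_vec_entry': "(A::real mat) \<in> carrier_mat nr nc \<Longrightarrow> v \<in> carrier_vec nc \<Longrightarrow> i < nr \<Longrightarrow>
   (A *\<^sub>v v) $ i = (\<Sum>j<nc. A $$ (i,j) * v $ j)"
  by (auto simp: scalar_prod_def atLeast0LessThan)

definition "W = U\<^sup>T * Si * U"

lemma UT_carrier: "U\<^sup>T \<in> carrier_mat m n" using U_carrier by auto

lemma W_carrier: "W \<in> carrier_mat m m"
  unfolding W_def using U_carrier Si_carrier by auto

lemma Uv_nz: assumes v: "v \<in> carrier_vec m" and nz: "v \<noteq> 0\<^sub>v m"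
  shows "U *\<^sub>v v \<noteq> 0\<^sub>v n"
proof
  assume z: "U *\<^sub>v v = 0\<^sub>v n"
  have "\<forall>i<n. (\<Sum>j<m. U $$ (i,j) * v $ j) = 0"
  proof (intro allI impI)
    fix i assume i: "i < n"
    have "(U *\<^sub>v v) $ i = 0" using z i by simp
    thus "(\<Sum>j<m. U $$ (i,j) * v $ j) = 0" using mult_vec_entry'[OF U_carrier v i] by simp
  qed
  hence "v $ j = 0" if "j < m" for j using U_inj[of "\<lambda>j. v $ j"] that by blast
  hence "v = 0\<^sub>v m" using v by (intro eq_vecI) auto
  thus False using nz by simp
qed

lemma W_form: assumes v: "v \<in> carrier_vec m"
  shows "v \<bullet> (W *\<^sub>v v) = (U *\<^sub>v v) \<bullet> (Si *\<^sub>v (U *\<^sub>v v))"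
proof -
  have Uv: "U *\<^sub>v v \<in> carrier_vec n" using U_carrier v by auto
  have w: "Si *\<^sub>v (U *\<^sub>v v) \<in> carrier_vec n" using Si_carrier Uv by auto
  have UTS: "U\<^sup>T * Si \<in> carrier_mat m n" using UT_carrier Si_carrier by auto
  have "W *\<^sub>v v = (U\<^sup>T * Si) *\<^sub>v (U *\<^sub>v v)"
    unfolding W_def by (rule assoc_mult_mat_vec[OF UTS U_carrier v])
  also have "\<dots> = U\<^sup>T *\<^sub>v (Si *\<^sub>v (U *\<^sub>v v))"
    by (rule assoc_mult_mat_vec[OF UT_carrier Si_carrier Uv])
  finally have "W *\<^sub>v v = U\<^sup>T *\<^sub>v (Si *\<^sub>v (U *\<^sub>v v))" .
  hence "v \<bullet> (W *\<^sub>v v) = (U\<^sup>T *\<^sub>v (Si *\<^sub>v (U *\<^sub>v v))) \<bullet> v"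
    using comm_scalar_prod[OF v, of "U\<^sup>T *\<^sub>v (Si *\<^sub>v (U *\<^sub>v v))"] UT_carrier w by simp
  also have "\<dots> = (Si *\<^sub>v (U *\<^sub>v v)) \<bullet> (U *\<^sub>v v)"
    by (rule transpose_vec_mult_scalar[OF U_carrier v w])
  also have "\<dots> = (U *\<^sub>v v) \<bullet> (Si *\<^sub>v (U *\<^sub>v v))"
    by (rule comm_scalar_prod[OF w Uv])
  finally show ?thesis .
qed

lemma W_pos: assumes v: "v \<in> carrier_vec m" and nz: "v \<noteq> 0\<^sub>v m"
  shows "v \<bullet> (W *\<^sub>v v) > 0"
  unfolding W_form[OF v] using Si_pos[OF _ Uv_nz[OF v nz]] U_carrier v by auto

lemma W_sym: "W\<^sup>T = W"
proof -
  have "W\<^sup>T = U\<^sup>T * (U\<^sup>T * Si)\<^sup>T" unfolding W_def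
    by (rule transpose_mult[of _ m n U m]) (use U_carrier Si_carrier in auto)
  also have "(U\<^sup>T * Si)\<^sup>T = Si\<^sup>T * U"
    using transpose_mult[of "U\<^sup>T" m n Si n] U_carrier Si_carrier by auto
  also have "U\<^sup>T * (Si\<^sup>T * U) = W" unfolding W_def Si_sym
    using U_carrier Si_carrier UT_carrier by (simp add: assoc_mult_mat[of _ m n _ n _ m])
  finally show ?thesis .
qed

lemma W_pd: "pos_def_mat W"
  unfolding pos_def_mat_def using W_carrier W_sym W_pos by blast

lemma W_inv: "minv W \<in> carrier_mat m m \<and> W * minv W = 1\<^sub>m m \<and> minv W * W = 1\<^sub>m m"
proof (rule minv_det[OF W_carrier], rule inj_det[OF W_carrier])
  fix v :: "real vec" assume v: "v \<in> carrier_vec m" and z: "W *\<^sub>v v = 0\<^sub>v m"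
  show "v = 0\<^sub>v m"
  proof (rule ccontr)
    assume "v \<noteq> 0\<^sub>v m"
    from W_pos[OF v this] z v show False by simp
  qed
qed

definition "K = mat n r (\<lambda>(i,k). kf k i)"

lemma K_carrier: "K \<in> carrier_mat n r" unfolding K_def by auto
lemma KT_carrier: "K\<^sup>T \<in> carrier_mat r n" using K_carrier by auto

lemma P_T: "P\<^sup>T = P" using SL unfolding signless_laplacian_def by auto

lemma PK: "P * K = 0\<^sub>m n r"
proof (rule eq_matI)
  fix i k assume i: "i < dim_row (0\<^sub>m n r :: real mat)" and k: "k < dim_col (0\<^sub>m n r :: real mat)"
  hence ik: "i < n" "k < r" by auto
  have "(P * K) $$ (i,k) = (\<Sum>j<n. P $$ (i,j) * kf k j)"
    using ik P_carrier K_carrier by (auto simp: scalar_prod_def atLeast0LessThan K_def intro!: sum.cong)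
  also have "\<dots> = 0" by (rule altP[OF alt_kf[OF ik(2)] ik(1)])
  finally show "(P * K) $$ (i,k) = 0\<^sub>m n r $$ (i,k)" using ik by simp
qed (use P_carrier K_carrier in auto)

lemma KtP: "K\<^sup>T * P = 0\<^sub>m r n"
proof -
  have "(P * K)\<^sup>T = K\<^sup>T * P\<^sup>T" by (rule transpose_mult[OF P_carrier K_carrier])
  thus ?thesis using PK P_T by simp
qed

lemma KtU: "K\<^sup>T * U = 0\<^sub>m r m"
proof (rule eq_matI)
  fix k j assume k: "k < dim_row (0\<^sub>m r m :: real mat)" and j: "j < dim_col (0\<^sub>m r m :: real mat)"
  hence kj: "k < r" "j < m" by auto
  have "(K\<^sup>T * U) $$ (k,j) = (\<Sum>i<n. U $$ (i,j) * kf k i)"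
    using kj K_carrier U_carrier by (auto simp: scalar_prod_def atLeast0LessThan K_def mult.commute intro!: sum.cong)
  also have "\<dots> = 0" by (rule KTU[OF kj])
  finally show "(K\<^sup>T * U) $$ (k,j) = 0\<^sub>m r m $$ (k,j)" using kj by simp
qed (use K_carrier U_carrier in auto)

definition "H = P + K * K\<^sup>T"

lemma H_carrier: "H \<in> carrier_mat n n" unfolding H_def using P_carrier K_carrier by auto

lemma KT_entry: "v \<in> carrier_vec n \<Longrightarrow> k < r \<Longrightarrow> (K\<^sup>T *\<^sub>v v) $ k = (\<Sum>i<n. kf k i * v $ i)"
  using mult_vec_entry'[OF KT_carrier, of v k] K_carrier by (simp add: K_def)

lemma H_inj: assumes v: "v \<in> carrier_vec n" and z: "H *\<^sub>v v = 0\<^sub>v n"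
  shows "v = 0\<^sub>v n"
proof -
  define z where "z = K\<^sup>T *\<^sub>v v"
  have zc: "z \<in> carrier_vec r" unfolding z_def using KT_carrier v by auto
  have Pv: "P *\<^sub>v v \<in> carrier_vec n" using P_carrier v by auto
  have Kz: "K *\<^sub>v z \<in> carrier_vec n" using K_carrier zc by auto
  have "H *\<^sub>v v = P *\<^sub>v v + K *\<^sub>v z"
    unfolding H_def z_def using P_carrier K_carrier KT_carrier v
    by (simp add: add_mult_distrib_mat_vec[of _ n n] assoc_mult_mat_vec[of _ n r _ n])
  hence "v \<bullet> (H *\<^sub>v v) = v \<bullet> (P *\<^sub>v v) + v \<bullet> (K *\<^sub>v z)"
    using scalar_prod_add_distrib[OF v Pv Kz] by simp
  hence "0 = v \<bullet> (P *\<^sub>v v) + v \<bullet> (K *\<^sub>v z)" using z v by simp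
  moreover have "v \<bullet> (P *\<^sub>v v) = Q (\<lambda>i. v $ i)"
    unfolding Q_def by (rule quad_form[OF P_carrier v])
  moreover have "v \<bullet> (K *\<^sub>v z) = z \<bullet> z"
    using transpose_vec_mult_scalar[OF K_carrier zc v] unfolding z_def by simp
  moreover have zz: "z \<bullet> z = (\<Sum>k<r. (z $ k)^2)" using zc
    by (simp add: scalar_prod_def atLeast0LessThan power2_eq_square)
  moreover have "(\<Sum>k<r. (z $ k)^2) \<ge> 0" by (simp add: sum_nonneg)
  ultimately have Q0: "Q (\<lambda>i. v $ i) = 0" and z0: "(\<Sum>k<r. (z $ k)^2) = 0"
    using Q_nonneg[of "\<lambda>i. v $ i"] by linarith+
  have "z = 0\<^sub>v r"
  proof (rule ccontr)
    assume "z \<noteq> 0\<^sub>v r"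
    from sq_pos[OF zc this] z0 show False by simp
  qed
  hence zk: "\<forall>k<r. (\<Sum>i<n. kf k i * v $ i) = 0"
    using KT_entry[OF v] unfolding z_def by (metis index_zero_vec(1))
  have "v $ i = 0" if "i < n" for i
    using kernel[OF Q_zero_ec[OF Q0] _ that] zk by simp
  thus ?thesis using v by (intro eq_vecI) auto
qed

lemma H_inv: "minv H \<in> carrier_mat n n \<and> H * minv H = 1\<^sub>m n \<and> minv H * H = 1\<^sub>m n"
  by (rule minv_det[OF H_carrier], rule inj_det[OF H_carrier], rule H_inj)

definition "Y = minv H * U"

lemma Y_carrier: "Y \<in> carrier_mat n m" unfolding Y_def using H_inv U_carrier by auto

lemma HY: "H * Y = U"
proof -
  have "H * Y = (H * minv H) * U" unfolding Y_def
    using assoc_mult_mat[OF H_carrier _ U_carrier, of "minv H"] H_inv by simp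
  thus ?thesis using H_inv U_carrier by simp
qed

lemma kf_off_delta: "k < r \<Longrightarrow> k' < r \<Longrightarrow> kf k' (off ps k) = (if k' = k then 1 else 0)"
  using kf_off[of k] in_block_other[of k' k "off ps k"] off_in_block[of k] by auto

lemma K_inj: assumes c: "c \<in> carrier_vec r" and z: "K *\<^sub>v c = 0\<^sub>v n" shows "c = 0\<^sub>v r"
proof (rule eq_vecI)
  fix k assume k: "k < dim_vec (0\<^sub>v r :: real vec)"
  hence k: "k < r" by simp
  have lt: "off ps k < n" using off_in_block[OF k] off_le_R[of "Suc k"] size by simp
  have "(K *\<^sub>v c) $ off ps k = (\<Sum>k'<r. K $$ (off ps k, k') * c $ k')"
    by (rule mult_vec_entry'[OF K_carrier c lt])
  also have "\<dots> = (\<Sum>k'<r. if k' = k then c $ k' else 0)"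
    using lt k by (intro sum.cong) (auto simp: K_def kf_off_delta)
  also have "\<dots> = c $ k" using k by simp
  finally show "c $ k = 0\<^sub>v r $ k" using z lt k by simp
qed (use c in simp)

lemma KtY: "K\<^sup>T * Y = 0\<^sub>m r m"
proof -
  have KTH: "K\<^sup>T * H = (K\<^sup>T * K) * K\<^sup>T"
  proof -
    have "K\<^sup>T * H = K\<^sup>T * P + K\<^sup>T * (K * K\<^sup>T)"
      unfolding H_def by (rule mult_add_distrib_mat[OF KT_carrier P_carrier]) (use K_carrier in auto)
    also have "K\<^sup>T * (K * K\<^sup>T) = (K\<^sup>T * K) * K\<^sup>T"
      using assoc_mult_mat[OF KT_carrier K_carrier KT_carrier] by simp
    finally show ?thesis using KtP K_carrier by simp
  qed
  have KK: "K\<^sup>T * K \<in> carrier_mat r r" using K_carrier by auto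
  define Z where "Z = K\<^sup>T * Y"
  have Zc: "Z \<in> carrier_mat r m" unfolding Z_def using KT_carrier Y_carrier by auto
  have "0\<^sub>m r m = K\<^sup>T * (H * Y)" using KtU HY by simp
  also have "\<dots> = (K\<^sup>T * H) * Y" using assoc_mult_mat[OF KT_carrier H_carrier Y_carrier] by simp
  also have "\<dots> = (K\<^sup>T * K) * Z" unfolding KTH Z_def
    using assoc_mult_mat[OF KK KT_carrier Y_carrier] by simp
  finally have KKZ: "(K\<^sup>T * K) * Z = 0\<^sub>m r m" by simp
  have "col Z j = 0\<^sub>v r" if j: "j < m" for j
  proof -
    define c where "c = col Z j"
    have c: "c \<in> carrier_vec r" unfolding c_def using Zc j by auto
    have Kc: "K *\<^sub>v c \<in> carrier_vec n" using K_carrier c by auto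
    have "(K\<^sup>T * K) *\<^sub>v c = col ((K\<^sup>T * K) * Z) j" unfolding c_def
      by (rule col_mult_vec[OF KK Zc j, symmetric])
    hence "(K\<^sup>T * K) *\<^sub>v c = 0\<^sub>v r" using KKZ j by simp
    hence "K\<^sup>T *\<^sub>v (K *\<^sub>v c) = 0\<^sub>v r" using assoc_mult_mat_vec[OF KT_carrier K_carrier c] by simp
    hence "(K *\<^sub>v c) \<bullet> (K *\<^sub>v c) = 0"
      using transpose_vec_mult_scalar[OF K_carrier c Kc] c by simp
    hence s0: "(\<Sum>i<n. ((K *\<^sub>v c) $ i)^2) = 0" using self_sp[OF Kc] by simp
    have "K *\<^sub>v c = 0\<^sub>v n"
    proof (rule ccontr)
      assume "K *\<^sub>v c \<noteq> 0\<^sub>v n"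
      from sq_pos[OF Kc this] s0 show False by simp
    qed
    thus ?thesis using K_inj[OF c] unfolding c_def by simp
  qed
  hence "Z = 0\<^sub>m r m"
    by (intro mat_col_eqI) (use Zc in auto)
  thus ?thesis unfolding Z_def .
qed

lemma PY: "P * Y = U"
proof -
  have "U = P * Y + (K * K\<^sup>T) * Y" using HY unfolding H_def
    using add_mult_distrib_mat[OF P_carrier _ Y_carrier, of "K * K\<^sup>T"] K_carrier by auto
  also have "(K * K\<^sup>T) * Y = K * (K\<^sup>T * Y)" using assoc_mult_mat[OF K_carrier KT_carrier Y_carrier] .
  also have "\<dots> = 0\<^sub>m n m" using KtY K_carrier by simp
  finally show ?thesis using P_carrier Y_carrier by simp
qed

abbreviation "Wi \<equiv> minv W"
definition "F = Si * U"
definition "G = Wi * (U\<^sup>T * Si)"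
definition "Nm = Si - F * G"

lemma Wi_carrier: "Wi \<in> carrier_mat m m" using W_inv by auto
lemma F_carrier: "F \<in> carrier_mat n m" unfolding F_def using Si_carrier U_carrier by auto
lemma UTSi_carrier: "U\<^sup>T * Si \<in> carrier_mat m n" using UT_carrier Si_carrier by auto
lemma G_carrier: "G \<in> carrier_mat m n" unfolding G_def using Wi_carrier UTSi_carrier by auto
lemma FG_carrier: "F * G \<in> carrier_mat n n" using F_carrier G_carrier by auto
lemma Nm_carrier: "Nm \<in> carrier_mat n n" unfolding Nm_def using minus_carrier_mat[OF FG_carrier] by simp

lemma E1: "Si * U * Wi * U\<^sup>T * Si = F * G"
proof -
  have FW: "F * Wi \<in> carrier_mat n m" using F_carrier Wi_carrier by auto
  have "Si * U * Wi * U\<^sup>T * Si = (F * Wi) * (U\<^sup>T * Si)" unfolding F_def[symmetric]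
    using assoc_mult_mat[OF FW UT_carrier Si_carrier] .
  also have "\<dots> = F * G" unfolding G_def using assoc_mult_mat[OF F_carrier Wi_carrier UTSi_carrier] .
  finally show ?thesis .
qed

lemma UTF: "U\<^sup>T * F = W"
  unfolding F_def W_def using assoc_mult_mat[OF UT_carrier Si_carrier U_carrier] by simp

lemma E2: "U\<^sup>T * Nm = 0\<^sub>m m n"
proof -
  have "U\<^sup>T * Nm = U\<^sup>T * Si - U\<^sup>T * (F * G)" unfolding Nm_def
    by (rule mult_minus_distrib_mat[OF UT_carrier Si_carrier FG_carrier])
  also have "U\<^sup>T * (F * G) = W * G" using assoc_mult_mat[OF UT_carrier F_carrier G_carrier] UTF by simp
  also have "W * G = (W * Wi) * (U\<^sup>T * Si)" unfolding G_def
    using assoc_mult_mat[OF W_carrier Wi_carrier UTSi_carrier] by simp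
  also have "\<dots> = U\<^sup>T * Si" using W_inv left_mult_one_mat[OF UTSi_carrier] by simp
  finally show ?thesis using UTSi_carrier by simp
qed

lemma E3: "P * Nm = 0\<^sub>m n n"
proof (rule eq_matI)
  fix i j assume "i < dim_row (0\<^sub>m n n :: real mat)" "j < dim_col (0\<^sub>m n n :: real mat)"
  hence ij: "i < n" "j < n" by auto
  define v where "v = col Nm j"
  have v: "v \<in> carrier_vec n" unfolding v_def using Nm_carrier ij by auto
  have "U\<^sup>T *\<^sub>v v = col (U\<^sup>T * Nm) j" unfolding v_def
    by (rule col_mult_vec[OF UT_carrier Nm_carrier ij(2), symmetric])
  hence UTv: "U\<^sup>T *\<^sub>v v = 0\<^sub>v m" using E2 ij by simp
  have "\<forall>j'<m. (\<Sum>i<n. U $$ (i,j') * v $ i) = 0"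
  proof (intro allI impI)
    fix j' assume j': "j' < m"
    have "(U\<^sup>T *\<^sub>v v) $ j' = (\<Sum>i<n. U\<^sup>T $$ (j',i) * v $ i)" by (rule mult_vec_entry'[OF UT_carrier v j'])
    also have "\<dots> = (\<Sum>i<n. U $$ (i,j') * v $ i)" using U_carrier j' by (intro sum.cong) auto
    finally show "(\<Sum>i<n. U $$ (i,j') * v $ i) = 0" using UTv j' by simp
  qed
  hence "alt (\<lambda>i. v $ i)" by (rule UT_alt)
  from altP[OF this ij(1)] have "(\<Sum>k<n. P $$ (i,k) * v $ k) = 0" .
  moreover have "(P * Nm) $$ (i,j) = (\<Sum>k<n. P $$ (i,k) * v $ k)"
    unfolding v_def using P_carrier Nm_carrier ij by (auto simp: scalar_prod_def atLeast0LessThan intro!: sum.cong)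
  ultimately show "(P * Nm) $$ (i,j) = 0\<^sub>m n n $$ (i,j)" using ij by simp
qed (use P_carrier Nm_carrier in auto)

lemma UG_carrier: "U * G \<in> carrier_mat n n" using U_carrier G_carrier by auto

lemma E4: "S * Nm = 1\<^sub>m n - U * G"
proof -
  have "S * Nm = S * Si - S * (F * G)" unfolding Nm_def
    by (rule mult_minus_distrib_mat[OF S_carrier Si_carrier FG_carrier])
  also have "S * (F * G) = (S * F) * G" using assoc_mult_mat[OF S_carrier F_carrier G_carrier] by simp
  also have "S * F = U" unfolding F_def using assoc_mult_mat[OF S_carrier Si_carrier U_carrier, symmetric] S_Si U_carrier
    by simp
  finally show ?thesis using S_Si by simp
qed

lemma E5:
  assumes t: "t \<ge> 0"
  shows "Nm = minv (S + t \<cdot>\<^sub>m P) - (minv (S + t \<cdot>\<^sub>m P) * U) * G"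
proof -
  let ?A = "S + t \<cdot>\<^sub>m P"
  let ?M = "minv ?A"
  have M: "?M \<in> carrier_mat n n" "?M * ?A = 1\<^sub>m n" using SP_inv[OF t] by auto
  have PN: "P \<in> carrier_mat n n" by (rule P_carrier)
  have "?A * Nm = S * Nm + (t \<cdot>\<^sub>m P) * Nm"
    by (rule add_mult_distrib_mat[OF S_carrier _ Nm_carrier]) (use PN in auto)
  also have "(t \<cdot>\<^sub>m P) * Nm = t \<cdot>\<^sub>m (P * Nm)" by (rule mult_smult_assoc_mat[OF PN Nm_carrier])
  also have "\<dots> = 0\<^sub>m n n" using E3 by auto
  moreover have "1\<^sub>m n - U * G \<in> carrier_mat n n" using minus_carrier_mat[OF UG_carrier] by simp
  ultimately have AN: "?A * Nm = 1\<^sub>m n - U * G" using E4 by simp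
  have "Nm = (?M * ?A) * Nm" using M Nm_carrier by simp
  also have "\<dots> = ?M * (?A * Nm)" using assoc_mult_mat[OF M(1) SP_carrier Nm_carrier] .
  also have "\<dots> = ?M * 1\<^sub>m n - ?M * (U * G)" unfolding AN
    by (rule mult_minus_distrib_mat[OF M(1) _ UG_carrier]) simp
  also have "?M * (U * G) = (?M * U) * G" using assoc_mult_mat[OF M(1) U_carrier G_carrier] by simp
  finally show ?thesis using M by simp
qed

lemma mult_entry: "A \<in> carrier_mat nr nk \<Longrightarrow> B \<in> carrier_mat nk nc \<Longrightarrow> i < nr \<Longrightarrow> j < nc \<Longrightarrow>
  (A * B) $$ (i,j) = (\<Sum>l<nk. A $$ (i,l) * B $$ (l,j))"
  by (auto simp: scalar_prod_def atLeast0LessThan intro!: sum.cong)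

lemma E6:
  assumes t: "t > 0" and i: "i < n" and k: "k < m"
  shows "(minv (S + t \<cdot>\<^sub>m P) * U) $$ (i,k) =
     (Y $$ (i,k) - ((minv (S + t \<cdot>\<^sub>m P) * S) * Y) $$ (i,k)) / t"
proof -
  let ?A = "S + t \<cdot>\<^sub>m P"
  let ?M = "minv ?A"
  have M: "?M \<in> carrier_mat n n" "?M * ?A = 1\<^sub>m n" using SP_inv[of t] t by auto
  have MS: "?M * S \<in> carrier_mat n n" "?M * P \<in> carrier_mat n n" using M S_carrier P_carrier by auto
  have MP: "(?M * P) $$ (i,l) = ((if i = l then 1 else 0) - (?M * S) $$ (i,l)) / t" if l: "l < n" for l
  proof -
    have "(?M * ?A) $$ (i,l) = (\<Sum>k<n. ?M $$ (i,k) * ?A $$ (k,l))"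
      by (rule mult_entry[OF M(1) SP_carrier i l])
    also have "\<dots> = (\<Sum>k<n. ?M $$ (i,k) * S $$ (k,l)) + t * (\<Sum>k<n. ?M $$ (i,k) * P $$ (k,l))"
      using l S_carrier P_carrier by (simp add: sum.distrib sum_distrib_left algebra_simps)
    also have "\<dots> = (?M * S) $$ (i,l) + t * (?M * P) $$ (i,l)"
      using mult_entry[OF M(1) S_carrier i l] mult_entry[OF M(1) P_carrier i l] by simp
    finally have "(?M * S) $$ (i,l) + t * (?M * P) $$ (i,l) = (if i = l then 1 else 0)"
      using M(2) i l by simp
    thus ?thesis using t by (simp add: field_simps)
  qed
  have "?M * U = (?M * P) * Y" using PY assoc_mult_mat[OF M(1) P_carrier Y_carrier] by simp
  hence "(?M * U) $$ (i,k) = (\<Sum>l<n. (?M * P) $$ (i,l) * Y $$ (l,k))"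
    using mult_entry[OF MS(2) Y_carrier i k] by simp
  also have "\<dots> = (\<Sum>l<n. ((if i = l then 1 else 0) - (?M * S) $$ (i,l)) * Y $$ (l,k) / t)"
    using MP by (intro sum.cong) auto
  also have "\<dots> = (\<Sum>l<n. (if i = l then 1 else 0) * Y $$ (l,k) - (?M * S) $$ (i,l) * Y $$ (l,k)) / t"
    by (simp add: sum_divide_distrib left_diff_distrib)
  also have "\<dots> = ((\<Sum>l<n. (if i = l then 1 else 0) * Y $$ (l,k)) - (\<Sum>l<n. (?M * S) $$ (i,l) * Y $$ (l,k))) / t"
    by (simp only: sum_subtractf)
  also have "(\<Sum>l<n. (if i = l then 1 else 0) * Y $$ (l,k)) = Y $$ (i,k)" using i
    by (simp add: if_distrib[of "\<lambda>x. x * _"] cong: if_cong)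
  also have "(\<Sum>l<n. (?M * S) $$ (i,l) * Y $$ (l,k)) = ((?M * S) * Y) $$ (i,k)"
    using mult_entry[OF MS(1) Y_carrier i k] by simp
  finally show ?thesis .
qed

lemma MU_lim:
  assumes i: "i < n" and k: "k < m"
  shows "((\<lambda>t. (minv (S + t \<cdot>\<^sub>m P) * U) $$ (i,k)) \<longlongrightarrow> 0) at_top"
proof -
  define C where "C = (\<Sum>l<n. (\<Sum>q<n. (1/\<alpha>) * \<bar>S $$ (q,l)\<bar>) * \<bar>Y $$ (l,k)\<bar>)"
  define D where "D = \<bar>Y $$ (i,k)\<bar> + C"
  have bound: "\<bar>(minv (S + t \<cdot>\<^sub>m P) * U) $$ (i,k)\<bar> \<le> D / t" if t: "t \<ge> 1" for t
  proof -
    let ?M = "minv (S + t \<cdot>\<^sub>m P)"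
    have t0: "t > 0" "t \<ge> 0" using t by auto
    have M: "?M \<in> carrier_mat n n" using SP_inv[OF t0(2)] by auto
    have MS: "?M * S \<in> carrier_mat n n" using M S_carrier by auto
    have b1: "\<bar>(?M * S) $$ (i,l)\<bar> \<le> (\<Sum>q<n. (1/\<alpha>) * \<bar>S $$ (q,l)\<bar>)" if l: "l < n" for l
    proof -
      have "\<bar>(?M * S) $$ (i,l)\<bar> = \<bar>\<Sum>q<n. ?M $$ (i,q) * S $$ (q,l)\<bar>"
        using mult_entry[OF M S_carrier i l] by simp
      also have "\<dots> \<le> (\<Sum>q<n. \<bar>?M $$ (i,q) * S $$ (q,l)\<bar>)" by (rule sum_abs)
      also have "\<dots> \<le> (\<Sum>q<n. (1/\<alpha>) * \<bar>S $$ (q,l)\<bar>)"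
      proof (rule sum_mono)
        fix q assume "q \<in> {..<n}"
        hence "\<bar>?M $$ (i,q)\<bar> \<le> 1/\<alpha>" using M_bound[OF t0(2) i] by simp
        from mult_right_mono[OF this abs_ge_zero[of "S $$ (q,l)"]]
        show "\<bar>?M $$ (i,q) * S $$ (q,l)\<bar> \<le> (1/\<alpha>) * \<bar>S $$ (q,l)\<bar>"
          by (simp only: abs_mult)
      qed
      finally show ?thesis .
    qed
    have b2: "\<bar>((?M * S) * Y) $$ (i,k)\<bar> \<le> C"
    proof -
      have "\<bar>((?M * S) * Y) $$ (i,k)\<bar> = \<bar>\<Sum>l<n. (?M * S) $$ (i,l) * Y $$ (l,k)\<bar>"
        using mult_entry[OF MS Y_carrier i k] by simp
      also have "\<dots> \<le> (\<Sum>l<n. \<bar>(?M * S) $$ (i,l) * Y $$ (l,k)\<bar>)" by (rule sum_abs)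
      also have "\<dots> \<le> C" unfolding C_def
      proof (rule sum_mono)
        fix l assume "l \<in> {..<n}"
        hence "\<bar>(?M * S) $$ (i,l)\<bar> \<le> (\<Sum>q<n. (1/\<alpha>) * \<bar>S $$ (q,l)\<bar>)" using b1 by simp
        thus "\<bar>(?M * S) $$ (i,l) * Y $$ (l,k)\<bar> \<le> (\<Sum>q<n. (1/\<alpha>) * \<bar>S $$ (q,l)\<bar>) * \<bar>Y $$ (l,k)\<bar>"
          by (simp add: abs_mult mult_right_mono)
      qed
      finally show ?thesis .
    qed
    have "\<bar>(?M * U) $$ (i,k)\<bar> = \<bar>Y $$ (i,k) - ((?M * S) * Y) $$ (i,k)\<bar> / t"
      using E6[OF t0(1) i k] t0 by simp
    also have "\<dots> \<le> D / t" unfolding D_def using b2 t0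
      by (intro divide_right_mono) auto
    finally show ?thesis .
  qed
  have g: "((\<lambda>t. D / t) \<longlongrightarrow> 0) at_top"
    by (rule tendsto_divide_0[OF tendsto_const filterlim_at_top_imp_at_infinity[OF filterlim_ident]])
  show ?thesis
  proof (rule Lim_null_comparison[OF _ g])
    show "\<forall>\<^sub>F t in at_top. norm ((minv (S + t \<cdot>\<^sub>m P) * U) $$ (i,k)) \<le> D / t"
      using eventually_ge_at_top[of "1::real"] by eventually_elim (use bound in simp)
  qed
qed

lemma main_lim:
  assumes i: "i < n" and j: "j < n"
  shows "((\<lambda>t. minv (S + t \<cdot>\<^sub>m P) $$ (i,j)) \<longlongrightarrow> Nm $$ (i,j)) at_top"
proof -
  have ev: "\<forall>\<^sub>F t in at_top. Nm $$ (i,j) + (\<Sum>k<m. (minv (S + t \<cdot>\<^sub>m P) * U) $$ (i,k) * G $$ (k,j))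
      = minv (S + t \<cdot>\<^sub>m P) $$ (i,j)"
    using eventually_ge_at_top[of "0::real"]
  proof eventually_elim
    case (elim t)
    let ?M = "minv (S + t \<cdot>\<^sub>m P)"
    have M: "?M \<in> carrier_mat n n" using SP_inv[OF elim] by auto
    have MU: "?M * U \<in> carrier_mat n m" using M U_carrier by auto
    have MUG: "(?M * U) * G \<in> carrier_mat n n" using MU G_carrier by auto
    have "Nm $$ (i,j) = ?M $$ (i,j) - ((?M * U) * G) $$ (i,j)"
    proof -
      have "dim_row ((?M * U) * G) = n" "dim_col ((?M * U) * G) = n" using MUG by auto
      hence "(?M - (?M * U) * G) $$ (i,j) = ?M $$ (i,j) - ((?M * U) * G) $$ (i,j)"
        using i j by (simp add: index_minus_mat)
      thus ?thesis using E5[OF elim] by simp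
    qed
    moreover have "((?M * U) * G) $$ (i,j) = (\<Sum>k<m. (?M * U) $$ (i,k) * G $$ (k,j))"
      by (rule mult_entry[OF MU G_carrier i j])
    ultimately show ?case by simp
  qed
  have "((\<lambda>t. Nm $$ (i,j) + (\<Sum>k<m. (minv (S + t \<cdot>\<^sub>m P) * U) $$ (i,k) * G $$ (k,j)))
      \<longlongrightarrow> Nm $$ (i,j) + (\<Sum>k<m. 0 * G $$ (k,j))) at_top"
    by (intro tendsto_intros MU_lim i) auto
  hence "((\<lambda>t. Nm $$ (i,j) + (\<Sum>k<m. (minv (S + t \<cdot>\<^sub>m P) * U) $$ (i,k) * G $$ (k,j)))
      \<longlongrightarrow> Nm $$ (i,j)) at_top" by simp
  thus ?thesis using tendsto_cong[OF ev] by simp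
qed

lemma Nm_eq: "(let S = Smat n \<alpha> l; U = Umat ps (n - sum_list (map (\<lambda>(p,q). p + q) ps)) in
          minv S - minv S * U * minv (U\<^sup>T * minv S * U) * U\<^sup>T * minv S) = Nm"
  unfolding Let_def minv_S W_def[symmetric] Nm_def E1[symmetric] ..

lemma final:
  "pos_def_mat ((Umat ps (n - sum_list (map (\<lambda>(p,q). p + q) ps)))\<^sup>T * minv (Smat n \<alpha> l)
                       * Umat ps (n - sum_list (map (\<lambda>(p,q). p + q) ps))) \<and>
    (\<forall>i < n. \<forall>j < n.
       ((\<lambda>t. minv (Smat n \<alpha> l + t \<cdot>\<^sub>m P) $$ (i,j)) \<longlongrightarrow>
         (let S = Smat n \<alpha> l; U = Umat ps (n - sum_list (map (\<lambda>(p,q). p + q) ps)) in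
          minv S - minv S * U * minv (U\<^sup>T * minv S * U) * U\<^sup>T * minv S) $$ (i,j)) at_top)"
  unfolding Nm_eq using W_pd main_lim unfolding minv_S W_def by blast

end


theorem proposition4p7:
  fixes n :: nat and l \<alpha> :: real and P :: "real mat" and ps :: "(nat \<times> nat) list"
  assumes n3: "n \<ge> 3" and lpos: "l > 0" and alpha: "\<alpha> \<ge> (real n - 2) * l"
    and SL: "signless_laplacian n P"
    and p_pos: "\<forall>(p,q) \<in> set ps. p \<ge> 1"
    and size: "sum_list (map (\<lambda>(p,q). p + q) ps) \<le> n"
    and blocks: "\<forall>k < length ps.
        comp P (off ps k) = {off ps k ..< off ps (Suc k)} \<and>
        bipartite_with P {off ps k ..< off ps (Suc k)}
          {off ps k ..< off ps k + fst (ps ! k)}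
          {off ps k + fst (ps ! k) ..< off ps (Suc k)}"
    and rest: "\<forall>v. sum_list (map (\<lambda>(p,q). p + q) ps) \<le> v \<and> v < n \<longrightarrow> \<not> bipartite P (comp P v)"
  shows "pos_def_mat ((Umat ps (n - sum_list (map (\<lambda>(p,q). p + q) ps)))\<^sup>T * minv (Smat n \<alpha> l)
                       * Umat ps (n - sum_list (map (\<lambda>(p,q). p + q) ps))) \<and>
    (\<forall>i < n. \<forall>j < n.
       ((\<lambda>t. minv (Smat n \<alpha> l + t \<cdot>\<^sub>m P) $$ (i,j)) \<longlongrightarrow>
         (let S = Smat n \<alpha> l; U = Umat ps (n - sum_list (map (\<lambda>(p,q). p + q) ps)) in
          minv S - minv S * U * minv (U\<^sup>T * minv S * U) * U\<^sup>T * minv S) $$ (i,j)) at_top)"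
proof -
  have "setting n l \<alpha> P ps" unfolding setting_def
    using n3 lpos alpha SL p_pos size blocks rest by blast
  then interpret setting n l \<alpha> P ps .
  show ?thesis by (rule final)
qed

end
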